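(* Let $\epsilon\in(0,1)$ and $T\in\mathbb{N}$, and let $k\in\mathbb{N}$. Let $w\in\{0,1\}^T$ be a random variable satisfying the $\epsilon$-martingale condition. Then \[ \Pr[w \text{ violates } k\text{-CP}] \le \Pr[w\text{ violates } k\text{-slot-CP}] \le T\cdot\exp\bigl(-\Omega(\epsilon^3(1-O(\epsilon))k)\bigr). \]
   Context: Characteristic strings and forks. A characteristic string is $w=w_1\dots w_n\in\{0,1\}^n$; index $i$ is honest if $w_i=0$ and adversarial if $w_i=1$. A fork for $w$ is a rooted tree $F=(V,E)$ with edges directed away from the root $r$, together with a labeling $\ell:V\to\{0,\dots,n\}$, such that (F1) $\ell(r)=0$; (F2) labels strictly increase along every directed path; (F3) every honest index is the label of exactly one vertex; (F4) if $i<j$ are honest indices then the vertex labeled $i$ has strictly smaller depth than the vertex labeled $j$. Write $F\vdash w$. A vertex is honest if it is the root or its label is an honest index. A tine is a directed path starting at the root (not necessarily ending at a leaf); its length is its number of edges, $\ell(t)$ is the label of its last vertex, and the depth of a vertex is the length of the tine ending at it. A tine $t$ is viable if its length is at least the depth of every honest vertex $v$ with $\ell(v)\le\ell(t)$. For a tine $t$, the trimmed tine $t^{\lceil k}$ is the portion of $t$ consisting of vertices labeled in $\{0,\dots,\ell(t)-k\}$; for tines $t_1,t_2$, $t_1\preceq t_2$ means $t_1$ is a prefix of $t_2$. $k$-slot-CP: a fork $F\vdash w$ satisfies $k$-slot-CP if for all pairs $(t_1,t_2)$ of viable tines of $F$ with $\ell(t_1)\le\ell(t_2)$, $t_1^{\lceil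 k}\preceq t_2$; $w$ satisfies $k$-slot-CP if every fork for $w$ does, and otherwise $w$ violates $k$-slot-CP. $k$-CP is the analogous (traditional) property where instead of removing the vertices of the last $k$ slots, the last $k$ blocks (vertices) of $t_1$ are removed; a $k$-CP violation implies a $k$-slot-CP violation. A random variable $W=(W_1,\dots,W_n)\in\{0,1\}^n$ satisfies the $\epsilon$-martingale condition if for every $t$, $\Pr[W_t=1\mid W_1,\dots,W_{t-1}]\le(1-\epsilon)/2$ (for arbitrary conditioning values). *)

theory Defs
  imports "HOL-Probability.Probability" "HOL-Library.Sublist"
begin

text \<open>Characteristic strings are bool lists; True = 1 = adversarial, False = 0 = honest.
  Indices are 1-based: w_i = w ! (i - 1).\<close>

definition honest_idx :: "bool list \<Rightarrow> nat \<Rightarrow> bool" where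
  "honest_idx w i \<longleftrightarrow> 1 \<le> i \<and> i \<le> length w \<and> \<not> w ! (i - 1)"

text \<open>A fork: finite vertex set (of naturals), a root, a parent map (the edges are
  parent v \<rightarrow> v for every non-root vertex v), and a labeling.\<close>

record fork =
  verts :: "nat set"
  root :: nat
  parent :: "nat \<Rightarrow> nat"
  lbl :: "nat \<Rightarrow> nat"

definition is_tine :: "fork \<Rightarrow> nat list \<Rightarrow> bool" where
  "is_tine F t \<longleftrightarrow> t \<noteq> [] \<and> hd t = root F \<and> set t \<subseteq> verts F \<and>
     (\<forall>i. Suc i < length t \<longrightarrow> t ! Suc i \<noteq> root F \<and> parent F (t ! Suc i) = t ! i)"

definition tine_len :: "nat list \<Rightarrow> nat" where
  "tine_len t = length t - 1"

definition tine_lbl :: "fork \<Rightarrow> nat list \<Rightarrow> nat" where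
  "tine_lbl F t = lbl F (last t)"

definition depth :: "fork \<Rightarrow> nat \<Rightarrow> nat" where
  "depth F v = (THE d. \<exists>t. is_tine F t \<and> last t = v \<and> d = tine_len t)"

definition is_fork :: "bool list \<Rightarrow> fork \<Rightarrow> bool" where
  "is_fork w F \<longleftrightarrow>
     finite (verts F) \<and> root F \<in> verts F \<and>
     (\<forall>v \<in> verts F - {root F}. parent F v \<in> verts F) \<and>
     (\<forall>v \<in> verts F. \<exists>m. (parent F ^^ m) v = root F) \<and>
     (\<forall>v \<in> verts F. lbl F v \<le> length w) \<and>
     lbl F (root F) = 0 \<and>
     (\<forall>v \<in> verts F - {root F}. lbl F (parent F v) < lbl F v) \<and>
     (\<forall>i. honest_idx w i \<longrightarrow> (\<exists>!v. v \<in> verts F \<and> lbl F v = i)) \<and>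
     (\<forall>u \<in> verts F. \<forall>v \<in> verts F. honest_idx w (lbl F u) \<and> honest_idx w (lbl F v)
        \<and> lbl F u < lbl F v \<longrightarrow> depth F u < depth F v)"

definition honest_vertex :: "bool list \<Rightarrow> fork \<Rightarrow> nat \<Rightarrow> bool" where
  "honest_vertex w F v \<longleftrightarrow> v = root F \<or> honest_idx w (lbl F v)"

definition viable :: "bool list \<Rightarrow> fork \<Rightarrow> nat list \<Rightarrow> bool" where
  "viable w F t \<longleftrightarrow> is_tine F t \<and>
     (\<forall>v \<in> verts F. honest_vertex w F v \<and> lbl F v \<le> tine_lbl F t \<longrightarrow> depth F v \<le> tine_len t)"

definition trim_slots :: "fork \<Rightarrow> nat \<Rightarrow> nat list \<Rightarrow> nat list" where
  "trim_slots F k t = filter (\<lambda>v. int (lbl F v) \<le> int (tine_lbl F t) - int k) t"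

definition trim_blocks :: "nat \<Rightarrow> nat list \<Rightarrow> nat list" where
  "trim_blocks k t = take (length t - k) t"

definition violates_slot_CP :: "nat \<Rightarrow> bool list \<Rightarrow> bool" where
  "violates_slot_CP k w \<longleftrightarrow> (\<exists>F. is_fork w F \<and> (\<exists>t1 t2. viable w F t1 \<and> viable w F t2 \<and>
      tine_lbl F t1 \<le> tine_lbl F t2 \<and> \<not> prefix (trim_slots F k t1) t2))"

definition violates_CP :: "nat \<Rightarrow> bool list \<Rightarrow> bool" where
  "violates_CP k w \<longleftrightarrow> (\<exists>F. is_fork w F \<and> (\<exists>t1 t2. viable w F t1 \<and> viable w F t2 \<and>
      tine_lbl F t1 \<le> tine_lbl F t2 \<and> \<not> prefix (trim_blocks k t1) t2))"

text \<open>epsilon-martingale condition for a distribution p on {0,1}^T (bool lists of length T):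
  Pr[W_{t+1} = 1 | W_1..W_t = xs] \<le> (1 - eps)/2 for all t < T and all xs, in
  multiplied-out form (so zero-probability conditions are harmless).\<close>
definition eps_martingale :: "real \<Rightarrow> nat \<Rightarrow> bool list pmf \<Rightarrow> bool" where
  "eps_martingale \<epsilon> T p \<longleftrightarrow> (\<forall>t < T. \<forall>xs. length xs = t \<longrightarrow>
      measure_pmf.prob p {w. take t w = xs \<and> w ! t}
        \<le> (1 - \<epsilon>) / 2 * measure_pmf.prob p {w. take t w = xs})"

end

theory Submission
  imports Defs
begin


lemma tine_basic:
  assumes "is_tine F t"
  shows "t \<noteq> []" "t ! 0 = root F" "\<And>i. i < length t \<Longrightarrow> t ! i \<in> verts F"
    "\<And>i. Suc i < length t \<Longrightarrow> t ! Suc i \<noteq> root F"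
    "\<And>i. Suc i < length t \<Longrightarrow> parent F (t ! Suc i) = t ! i"
  using assms unfolding is_tine_def by (auto simp: hd_conv_nth)

lemma tine_take:
  assumes "is_tine F t" "0 < j"
  shows "is_tine F (take j t)"
  using assms unfolding is_tine_def
  by (auto simp: hd_take dest: in_set_takeD)

lemma tine_unique_aux:
  "length t1 = n \<Longrightarrow> is_tine F t1 \<Longrightarrow> is_tine F t2 \<Longrightarrow> last t1 = last t2 \<Longrightarrow> t1 = t2"
proof (induction n arbitrary: t1 t2)
  case 0
  then show ?case by (auto simp: is_tine_def)
next
  case (Suc n)
  have ne1: "t1 \<noteq> []" and ne2: "t2 \<noteq> []" using Suc.prems by (auto simp: is_tine_def)
  show ?case
  proof (cases n)
    case 0
    then have t1: "t1 = [root F]" using Suc.prems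
      by (cases t1) (auto simp: is_tine_def)
    show ?thesis
    proof (cases "length t2 = 1")
      case True
      then show ?thesis using t1 Suc.prems(3) by (cases t2) (auto simp: is_tine_def)
    next
      case False
      then have "Suc (length t2 - 2) < length t2" using ne2 by (cases t2) auto
      then have "t2 ! Suc (length t2 - 2) \<noteq> root F" using tine_basic(4)[OF Suc.prems(3)] by blast
      moreover have "Suc (length t2 - 2) = length t2 - 1" using False ne2 by (cases t2) auto
      ultimately have "last t2 \<noteq> root F" using ne2 by (simp add: last_conv_nth)
      then show ?thesis using Suc.prems t1 by simp
    qed
  next
    case (Suc m)
    have l1: "length t1 = Suc (Suc m)" using Suc.prems `n = Suc m` by simp
    have "t1 ! Suc m \<noteq> root F" using tine_basic(4)[OF Suc.prems(2)] l1 by simp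
    then have lr: "last t1 \<noteq> root F" using l1 ne1 by (simp add: last_conv_nth)
    have l2: "2 \<le> length t2"
    proof (rule ccontr)
      assume "\<not> 2 \<le> length t2"
      moreover have "length t2 \<noteq> 0" using ne2 by simp
      ultimately have "length t2 = 1" by linarith
      then have "last t2 = root F" using tine_basic(2)[OF Suc.prems(3)] ne2 by (simp add: last_conv_nth)
      then show False using lr Suc.prems(4) by simp
    qed
    define b1 where "b1 = butlast t1"
    define b2 where "b2 = butlast t2"
    have tb1: "is_tine F b1" unfolding b1_def butlast_conv_take
      by (rule tine_take[OF Suc.prems(2)]) (use l1 in simp)
    have tb2: "is_tine F b2" unfolding b2_def butlast_conv_take
      by (rule tine_take[OF Suc.prems(3)]) (use l2 in simp)
    have lb1: "last b1 = parent F (last t1)"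
    proof -
      have "parent F (t1 ! Suc m) = t1 ! m" using tine_basic(5)[OF Suc.prems(2)] l1 by simp
      moreover have "last (butlast t1) = t1 ! m" using l1
        by (subst last_conv_nth) (auto simp: nth_butlast simp flip: length_0_conv)
      ultimately show ?thesis using l1 ne1 unfolding b1_def by (simp add: last_conv_nth)
    qed
    have lb2: "last b2 = parent F (last t2)"
    proof -
      have "parent F (t2 ! Suc (length t2 - 2)) = t2 ! (length t2 - 2)"
        using tine_basic(5)[OF Suc.prems(3)] l2 by simp
      moreover have "Suc (length t2 - 2) = length t2 - 1" using l2 by simp
      moreover have "last (butlast t2) = t2 ! (length t2 - 2)" using l2
        by (subst last_conv_nth) (auto simp: nth_butlast numeral_2_eq_2 simp flip: length_0_conv)
      ultimately show ?thesis using l2 ne2 unfolding b2_def by (simp add: last_conv_nth)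
    qed
    have "b1 = b2"
      by (rule Suc.IH) (use l1 tb1 tb2 lb1 lb2 Suc.prems(4) b1_def `n = Suc m` in auto)
    then have "butlast t1 @ [last t1] = butlast t2 @ [last t2]"
      using Suc.prems(4) unfolding b1_def b2_def by simp
    then show ?thesis using ne1 ne2 by simp
  qed
qed

lemma tine_unique: "is_tine F t1 \<Longrightarrow> is_tine F t2 \<Longrightarrow> last t1 = last t2 \<Longrightarrow> t1 = t2"
  using tine_unique_aux by blast

lemma depth_tine: "is_tine F t \<Longrightarrow> depth F (last t) = length t - 1"
  unfolding depth_def tine_len_def
  by (rule the_equality) (auto dest: tine_unique)

lemma depth_nth: "is_tine F t \<Longrightarrow> i < length t \<Longrightarrow> depth F (t ! i) = i"
proof -
  assume a: "is_tine F t" "i < length t"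
  have "last (take (Suc i) t) = t ! i" using a(2) by (simp add: take_Suc_conv_app_nth)
  then show ?thesis using depth_tine[OF tine_take[OF a(1), of "Suc i"]] a(2) by simp
qed

lemma tine_exists_aux:
  assumes F: "is_fork w F"
  shows "v \<in> verts F \<Longrightarrow> (parent F ^^ m) v = root F \<Longrightarrow> \<exists>t. is_tine F t \<and> last t = v"
proof (induction m arbitrary: v)
  case 0
  then show ?case using F by (intro exI[of _ "[root F]"]) (auto simp: is_tine_def is_fork_def)
next
  case (Suc m)
  show ?case
  proof (cases "v = root F")
    case True
    then show ?thesis using F by (intro exI[of _ "[root F]"]) (auto simp: is_tine_def is_fork_def)
  next
    case False
    have pv: "parent F v \<in> verts F" using F Suc.prems False by (auto simp: is_fork_def)
    have "(parent F ^^ m) (parent F v) = root F" using Suc.prems(2) by (simp add: funpow_Suc_right del: funpow.simps)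
    then obtain t where t: "is_tine F t" "last t = parent F v" using Suc.IH pv by blast
    have all: "\<forall>i. Suc i < length (t @ [v]) \<longrightarrow> (t @ [v]) ! Suc i \<noteq> root F \<and> parent F ((t @ [v]) ! Suc i) = (t @ [v]) ! i"
    proof (intro allI impI)
      fix i assume i: "Suc i < length (t @ [v])"
      show "(t @ [v]) ! Suc i \<noteq> root F \<and> parent F ((t @ [v]) ! Suc i) = (t @ [v]) ! i"
      proof (cases "Suc i < length t")
        case True
        then show ?thesis using t(1) i by (simp add: nth_append is_tine_def)
      next
        case False
        then have "i = length t - 1" using i by simp
        moreover have "t \<noteq> []" using t by (simp add: is_tine_def)
        ultimately show ?thesis using False t(2) \<open>v \<noteq> root F\<close>
          by (simp add: nth_append last_conv_nth)
      qed
    qed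
    have "is_tine F (t @ [v])"
      using all t Suc.prems(1) unfolding is_tine_def by auto
    then show ?thesis by (intro exI[of _ "t @ [v]"]) simp
  qed
qed

lemma fork_reach: "is_fork w F \<Longrightarrow> v \<in> verts F \<Longrightarrow> \<exists>m. (parent F ^^ m) v = root F"
  by (simp add: is_fork_def)

lemma tine_exists: "is_fork w F \<Longrightarrow> v \<in> verts F \<Longrightarrow> \<exists>t. is_tine F t \<and> last t = v"
  using tine_exists_aux fork_reach by metis

lemma depth_pos: 
  assumes "is_fork w F" "v \<in> verts F" "v \<noteq> root F"
  shows "0 < depth F v"
proof -
  obtain t where t: "is_tine F t" "last t = v" using tine_exists assms by blast
  have "length t \<noteq> 1"
  proof
    assume "length t = 1"
    then have "last t = root F" using tine_basic(1,2)[OF t(1)] by (simp add: last_conv_nth)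
    then show False using t assms by simp
  qed
  moreover have "t \<noteq> []" using t by (simp add: is_tine_def)
  ultimately show ?thesis using depth_tine[OF t(1)] t(2) by (cases t) auto
qed

lemma tine_lbl_step:
  assumes F: "is_fork w F" and t: "is_tine F t" and i: "Suc i < length t"
  shows "lbl F (t ! i) < lbl F (t ! Suc i)"
proof -
  have "t ! Suc i \<in> verts F - {root F}" using tine_basic[OF t] i by auto
  then have "lbl F (parent F (t ! Suc i)) < lbl F (t ! Suc i)" using F by (auto simp: is_fork_def)
  then show ?thesis using tine_basic(5)[OF t i] by simp
qed

lemma tine_lbl_mono:
  assumes F: "is_fork w F" and t: "is_tine F t"
  shows "i < j \<Longrightarrow> j < length t \<Longrightarrow> lbl F (t ! i) + (j - i) \<le> lbl F (t ! j)"
proof (induction j)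
  case 0 then show ?case by simp
next
  case (Suc j)
  have st: "lbl F (t ! j) < lbl F (t ! Suc j)" using tine_lbl_step[OF F t] Suc.prems by simp
  show ?case
  proof (cases "i = j")
    case True then show ?thesis using st by simp
  next
    case False
    then have "lbl F (t ! i) + (j - i) \<le> lbl F (t ! j)" using Suc by simp
    moreover have "Suc j - i = Suc (j - i)" using False Suc.prems by simp
    ultimately show ?thesis using st by linarith
  qed
qed

lemma tine_lbl_less:
  assumes F: "is_fork w F" and t: "is_tine F t" and "i < j" "j < length t"
  shows "lbl F (t ! i) < lbl F (t ! j)"
  using tine_lbl_mono[OF F t assms(3,4)] assms(3) by simp

lemma tine_lbl_le:
  assumes F: "is_fork w F" and t: "is_tine F t" and "i \<le> j" "j < length t"
  shows "lbl F (t ! i) \<le> lbl F (t ! j)"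
  using tine_lbl_less[OF F t] assms by (cases "i = j") (auto intro: less_imp_le)

lemma tine_lbl_inj:
  assumes F: "is_fork w F" and t: "is_tine F t" and "i < length t" "j < length t"
    and "lbl F (t ! i) = lbl F (t ! j)"
  shows "i = j"
proof (rule ccontr)
  assume "i \<noteq> j"
  then consider "i < j" | "j < i" by linarith
  then show False using tine_lbl_less[OF F t, of i j] tine_lbl_less[OF F t, of j i] assms by cases auto
qed

lemma tine_lbl_bound:
  assumes F: "is_fork w F" and t: "is_tine F t" and "i < length t"
  shows "lbl F (t ! i) \<le> length w"
  using F tine_basic(3)[OF t assms(3)] by (auto simp: is_fork_def)

lemma root_lbl: "is_fork w F \<Longrightarrow> lbl F (root F) = 0"
  by (simp add: is_fork_def)



definition ws :: "bool list \<Rightarrow> int" where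
  "ws xs = sum_list (map (\<lambda>b. if b then 1 else -1) xs)"

definition Sx :: "bool list \<Rightarrow> nat \<Rightarrow> int" where
  "Sx w j = ws (take j w)"

definition cat :: "bool list \<Rightarrow> nat \<Rightarrow> bool" where
  "cat w c \<longleftrightarrow> 1 \<le> c \<and> c \<le> length w \<and> (\<forall>j<c. Sx w c < Sx w j) \<and>
     (\<forall>r. c \<le> r \<and> r \<le> length w \<longrightarrow> Sx w r \<le> Sx w c)"

lemma Sx_Suc: "e < length w \<Longrightarrow> Sx w (Suc e) = Sx w e + (if w ! e then 1 else -1)"
  by (simp add: Sx_def ws_def take_Suc_conv_app_nth)

lemma Sx_diff:
  "e \<le> length w \<Longrightarrow> a \<le> e \<Longrightarrow> Sx w e - Sx w a =
     int (card {j\<in>{a<..e}. w ! (j - 1)}) - int (card {j\<in>{a<..e}. \<not> w ! (j - 1)})"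
proof (induction e)
  case 0 then show ?case by simp
next
  case (Suc e)
  show ?case
  proof (cases "a = Suc e")
    case True then show ?thesis by simp
  next
    case False
    then have ae: "a \<le> e" using Suc.prems by simp
    have IH: "Sx w e - Sx w a = int (card {j\<in>{a<..e}. w ! (j - 1)}) - int (card {j\<in>{a<..e}. \<not> w ! (j - 1)})"
      using Suc.IH Suc.prems ae by simp
    have iv: "{a<..Suc e} = insert (Suc e) {a<..e}" using ae by auto
    have nm: "Suc e \<notin> {a<..e}" by simp
    show ?thesis
    proof (cases "w ! e")
      case True
      have s1: "{j\<in>{a<..Suc e}. w ! (j - 1)} = insert (Suc e) {j\<in>{a<..e}. w ! (j - 1)}"
        using iv True by auto
      have s2: "{j\<in>{a<..Suc e}. \<not> w ! (j - 1)} = {j\<in>{a<..e}. \<not> w ! (j - 1)}"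
        using iv True by auto
      show ?thesis using IH Sx_Suc[of e w] Suc.prems True unfolding s1 s2 by simp
    next
      case False
      have s1: "{j\<in>{a<..Suc e}. w ! (j - 1)} = {j\<in>{a<..e}. w ! (j - 1)}"
        using iv False by auto
      have s2: "{j\<in>{a<..Suc e}. \<not> w ! (j - 1)} = insert (Suc e) {j\<in>{a<..e}. \<not> w ! (j - 1)}"
        using iv False by auto
      show ?thesis using IH Sx_Suc[of e w] Suc.prems False unfolding s1 s2 by simp
    qed
  qed
qed

lemma cat_honest: assumes "cat w c" shows "honest_idx w c"
proof -
  have c: "1 \<le> c" "c \<le> length w" "Sx w c < Sx w (c - 1)" using assms unfolding cat_def by auto
  have "Sx w c = Sx w (c - 1) + (if w ! (c - 1) then 1 else -1)"
    using Sx_Suc[of "c - 1" w] c by simp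
  then have "\<not> w ! (c - 1)" using c(3) by (auto split: if_splits)
  then show ?thesis using c unfolding honest_idx_def by simp
qed

definition hvx :: "fork \<Rightarrow> nat \<Rightarrow> nat" where
  "hvx F j = (THE v. v \<in> verts F \<and> lbl F v = j)"

lemma hvx:
  assumes "is_fork w F" "honest_idx w j"
  shows "hvx F j \<in> verts F" "lbl F (hvx F j) = j"
proof -
  have "\<forall>i. honest_idx w i \<longrightarrow> (\<exists>!v. v \<in> verts F \<and> lbl F v = i)" using assms(1) by (simp add: is_fork_def)
  then have "\<exists>!v. v \<in> verts F \<and> lbl F v = j" using assms(2) by blast
  from theI'[OF this] show "hvx F j \<in> verts F" "lbl F (hvx F j) = j" unfolding hvx_def by auto
qed

lemma hvx_unique:
  assumes "is_fork w F" "honest_idx w j" "v \<in> verts F" "lbl F v = j"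
  shows "v = hvx F j"
proof -
  have "\<forall>i. honest_idx w i \<longrightarrow> (\<exists>!v. v \<in> verts F \<and> lbl F v = i)" using assms(1) by (simp add: is_fork_def)
  then have "\<exists>!v. v \<in> verts F \<and> lbl F v = j" using assms(2) by blast
  then show ?thesis using hvx[OF assms(1,2)] assms(3,4) by blast
qed

lemma F4:
  assumes "is_fork w F" "u \<in> verts F" "v \<in> verts F" "honest_idx w (lbl F u)" "honest_idx w (lbl F v)"
    "lbl F u < lbl F v"
  shows "depth F u < depth F v"
proof -
  have "\<forall>u \<in> verts F. \<forall>v \<in> verts F. honest_idx w (lbl F u) \<and> honest_idx w (lbl F v)
        \<and> lbl F u < lbl F v \<longrightarrow> depth F u < depth F v" using assms(1) by (simp add: is_fork_def)
  then show ?thesis using assms(2-) by blast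
qed

lemma catalan_on_tine:
  assumes F: "is_fork w F" and vt: "viable w F t" and cc: "cat w c" and cl: "c \<le> tine_lbl F t"
  shows "\<exists>i<length t. lbl F (t ! i) = c"
proof (rule ccontr)
  assume nc: "\<not> (\<exists>i<length t. lbl F (t ! i) = c)"
  have t: "is_tine F t" using vt unfolding viable_def by simp
  define n where "n = length t - 1"
  have lt: "length t = Suc n" using tine_basic(1)[OF t] unfolding n_def by (cases t) auto
  define l where "l i = lbl F (t ! i)" for i
  have mono: "\<And>i j. i < j \<Longrightarrow> j \<le> n \<Longrightarrow> l i < l j"
    unfolding l_def using tine_lbl_less[OF F t] lt by simp
  have l0: "l 0 = 0" unfolding l_def using tine_basic(2)[OF t] root_lbl[OF F] by simp
  have ln: "l n = tine_lbl F t" unfolding l_def tine_lbl_def using lt tine_basic(1)[OF t]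
    by (simp add: last_conv_nth)
  have lw: "\<And>i. i \<le> n \<Longrightarrow> l i \<le> length w" unfolding l_def using tine_lbl_bound[OF F t] lt by simp
  have vin: "\<And>i. i \<le> n \<Longrightarrow> t ! i \<in> verts F" using tine_basic(3)[OF t] lt by simp
  have dep: "\<And>i. i \<le> n \<Longrightarrow> depth F (t ! i) = i" using depth_nth[OF t] lt by simp
  have c1: "1 \<le> c" "c \<le> length w" using cc unfolding cat_def by auto
  have chon: "honest_idx w c" using cat_honest[OF cc] .
  define I0 where "I0 = {i. i \<le> n \<and> l i < c \<and> (i = 0 \<or> honest_idx w (l i))}"
  have fI0: "finite I0" unfolding I0_def by simp
  have 0: "0 \<in> I0" unfolding I0_def using l0 c1 by simp
  define i0 where "i0 = Max I0"
  have i0I: "i0 \<in> I0" unfolding i0_def using fI0 0 Max_in[of I0] by blast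
  have i0max: "\<And>i. i \<in> I0 \<Longrightarrow> i \<le> i0" unfolding i0_def using fI0 by simp
  define a where "a = l i0"
  have i0n: "i0 \<le> n" and ac: "a < c" and hon0: "i0 = 0 \<or> honest_idx w a"
    using i0I unfolding I0_def a_def by auto
  obtain i1 e where i01: "i0 < i1" and i1n: "i1 \<le> Suc n" and ce: "c \<le> e" and ew: "e \<le> length w"
    and adv: "\<And>i. i0 < i \<Longrightarrow> i < i1 \<Longrightarrow> i \<le> n \<and> \<not> honest_idx w (l i) \<and> l i \<le> e"
    and up: "\<And>v. v \<in> verts F \<Longrightarrow> honest_idx w (lbl F v) \<Longrightarrow> lbl F v \<le> e \<Longrightarrow> depth F v < i1"
  proof (cases "\<exists>i. i0 < i \<and> i \<le> n \<and> honest_idx w (l i)")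
    case True
    define i1 where "i1 = (LEAST i. i0 < i \<and> i \<le> n \<and> honest_idx w (l i))"
    have i1p: "i0 < i1" "i1 \<le> n" "honest_idx w (l i1)"
      using LeastI_ex[OF True] unfolding i1_def by auto
    have i1min: "\<And>i. i0 < i \<Longrightarrow> i \<le> n \<Longrightarrow> honest_idx w (l i) \<Longrightarrow> i1 \<le> i"
      unfolding i1_def by (simp add: Least_le)
    have "l i1 \<noteq> c" using nc i1p lt unfolding l_def by auto
    moreover have "\<not> l i1 < c"
    proof
      assume "l i1 < c"
      then have "i1 \<in> I0" unfolding I0_def using i1p by simp
      then show False using i0max i1p by fastforce
    qed
    ultimately have ci1: "c < l i1" by simp
    show ?thesis
    proof (rule that[of i1 "l i1 - 1"])
      show "i0 < i1" "i1 \<le> Suc n" using i1p by auto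
      show "c \<le> l i1 - 1" using ci1 by simp
      show "l i1 - 1 \<le> length w" using lw[OF i1p(2)] by simp
    next
      fix i assume i: "i0 < i" "i < i1"
      then have "i \<le> n" using i1p by simp
      moreover have "\<not> honest_idx w (l i)" using i1min i \<open>i \<le> n\<close> by fastforce
      moreover have "l i < l i1" using mono i i1p by simp
      ultimately show "i \<le> n \<and> \<not> honest_idx w (l i) \<and> l i \<le> l i1 - 1" by simp
    next
      fix v assume v: "v \<in> verts F" "honest_idx w (lbl F v)" "lbl F v \<le> l i1 - 1"
      have "depth F v < depth F (t ! i1)"
        by (rule F4[OF F v(1) vin[OF i1p(2)] v(2)]) (use i1p v ci1 in \<open>auto simp: l_def\<close>)
      then show "depth F v < i1" using dep[OF i1p(2)] by simp
    qed
  next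
    case False
    show ?thesis
    proof (rule that[of "Suc n" "l n"])
      show "i0 < Suc n" "Suc n \<le> Suc n" using i0n by auto
      show "c \<le> l n" using ln cl by simp
      show "l n \<le> length w" using lw by simp
    next
      fix i assume i: "i0 < i" "i < Suc n"
      have "i \<le> n" using i by simp
      moreover have "\<not> honest_idx w (l i)" using False i \<open>i \<le> n\<close> by auto
      moreover have "l i \<le> l n" using mono[of i n] \<open>i \<le> n\<close> by (cases "i = n") auto
      ultimately show "i \<le> n \<and> \<not> honest_idx w (l i) \<and> l i \<le> l n" by simp
    next
      fix v assume v: "v \<in> verts F" "honest_idx w (lbl F v)" "lbl F v \<le> l n"
      have "depth F v \<le> tine_len t"
        using vt v ln unfolding viable_def honest_vertex_def by auto
      then show "depth F v < Suc n" unfolding tine_len_def using lt by simp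
    qed
  qed
  define Adv where "Adv = {j\<in>{a<..e}. w ! (j - 1)}"
  define Hon where "Hon = {j\<in>{a<..e}. \<not> w ! (j - 1)}"
  have cA: "i1 - Suc i0 \<le> card Adv"
  proof -
    have "inj_on l {i0<..<i1}"
    proof (rule inj_onI)
      fix x y assume "x \<in> {i0<..<i1}" "y \<in> {i0<..<i1}" "l x = l y"
      then show "x = y" using mono adv by (metis greaterThanLessThan_iff less_irrefl nat_neq_iff)
    qed
    moreover have "l ` {i0<..<i1} \<subseteq> Adv"
    proof
      fix y assume "y \<in> l ` {i0<..<i1}"
      then obtain i where i: "i0 < i" "i < i1" "y = l i" by auto
      have h: "i \<le> n" "\<not> honest_idx w (l i)" "l i \<le> e" using adv[OF i(1,2)] by auto
      have "a < l i" unfolding a_def using mono[OF i(1) h(1)] .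
      moreover have "l i \<le> length w" using lw h(1) .
      ultimately have "w ! (l i - 1)" using h(2) unfolding honest_idx_def by simp
      then show "y \<in> Adv" unfolding Adv_def using i(3) h(3) \<open>a < l i\<close> by simp
    qed
    moreover have "finite Adv" unfolding Adv_def by simp
    ultimately have "card {i0<..<i1} \<le> card Adv" by (meson card_inj_on_le)
    then show ?thesis by simp
  qed
  have cH: "card Hon \<le> i1 - Suc i0"
  proof -
    define g where "g j = depth F (hvx F j)" for j
    have honj: "\<And>j. j \<in> Hon \<Longrightarrow> honest_idx w j"
      unfolding Hon_def honest_idx_def using ew by auto
    have gmono: "\<And>j j'. j \<in> Hon \<Longrightarrow> j' \<in> Hon \<Longrightarrow> j < j' \<Longrightarrow> g j < g j'"
      unfolding g_def using F4[OF F] hvx[OF F] honj by metis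
    have "inj_on g Hon"
    proof (rule inj_onI)
      fix x y assume "x \<in> Hon" "y \<in> Hon" "g x = g y"
      then show "x = y" using gmono by (metis less_irrefl nat_neq_iff)
    qed
    moreover have "g ` Hon \<subseteq> {i0<..<i1}"
    proof
      fix y assume "y \<in> g ` Hon"
      then obtain j where j: "j \<in> Hon" "y = g j" by auto
      have hj: "honest_idx w j" using honj j(1) .
      have hv: "hvx F j \<in> verts F" "lbl F (hvx F j) = j" using hvx[OF F hj] by auto
      have aj: "a < j" "j \<le> e" using j(1) unfolding Hon_def by auto
      have "i0 < g j"
      proof (cases "i0 = 0")
        case True
        have "hvx F j \<noteq> root F" using hv root_lbl[OF F] hj unfolding honest_idx_def by auto
        then show ?thesis using depth_pos[OF F hv(1)] True unfolding g_def by simp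
      next
        case False
        then have ha: "honest_idx w a" using hon0 by simp
        have "depth F (t ! i0) < depth F (hvx F j)"
          by (rule F4[OF F vin[OF i0n] hv(1)]) (use ha hj hv aj in \<open>auto simp: a_def l_def\<close>)
        then show ?thesis using dep[OF i0n] unfolding g_def by simp
      qed
      moreover have "g j < i1" unfolding g_def using up[OF hv(1)] hv hj aj by simp
      ultimately show "y \<in> {i0<..<i1}" using j by simp
    qed
    ultimately have "card Hon \<le> card {i0<..<i1}" by (meson card_inj_on_le finite_greaterThanLessThan)
    then show ?thesis by simp
  qed
  have ae: "a \<le> e" using ac ce by simp
  have "Sx w e - Sx w a = int (card Adv) - int (card Hon)"
    unfolding Adv_def Hon_def using Sx_diff[OF ew ae] .
  then have "Sx w a \<le> Sx w e" using cA cH by linarith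
  moreover have "Sx w c < Sx w a" using cc ac unfolding cat_def by auto
  moreover have "Sx w e \<le> Sx w c" using cc ce ew unfolding cat_def by auto
  ultimately show False by simp
qed


lemma filter_eq_takeWhile_mono:
  "(\<forall>i j. i \<le> j \<longrightarrow> j < length xs \<longrightarrow> P (xs ! j) \<longrightarrow> P (xs ! i)) \<Longrightarrow> filter P xs = takeWhile P xs"
proof (induction xs)
  case Nil then show ?case by simp
next
  case (Cons x xs)
  show ?case
  proof (cases "P x")
    case True
    have "\<forall>i j. i \<le> j \<longrightarrow> j < length xs \<longrightarrow> P (xs ! j) \<longrightarrow> P (xs ! i)"
    proof (intro allI impI)
      fix i j assume "i \<le> j" "j < length xs" "P (xs ! j)"
      then show "P (xs ! i)" using Cons.prems[rule_format, of "Suc i" "Suc j"] by simp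
    qed
    then show ?thesis using Cons.IH True by simp
  next
    case False
    have "\<forall>y\<in>set xs. \<not> P y"
    proof
      fix y assume "y \<in> set xs"
      then obtain j where "j < length xs" "y = xs ! j" by (auto simp: in_set_conv_nth)
      then show "\<not> P y" using Cons.prems[rule_format, of 0 "Suc j"] False by auto
    qed
    then show ?thesis using False by (simp add: filter_empty_conv)
  qed
qed

lemma trim_slots_take:
  assumes F: "is_fork w F" and t: "is_tine F t"
  shows "\<exists>j\<le>length t. trim_slots F k t = take j t \<and>
     (\<forall>i<j. int (lbl F (t ! i)) \<le> int (tine_lbl F t) - int k) \<and>
     (\<forall>i. j \<le> i \<and> i < length t \<longrightarrow> int (tine_lbl F t) - int k < int (lbl F (t ! i)))"
proof -
  define P where "P v = (int (lbl F v) \<le> int (tine_lbl F t) - int k)" for v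
  have mono: "\<forall>i j. i \<le> j \<longrightarrow> j < length t \<longrightarrow> P (t ! j) \<longrightarrow> P (t ! i)"
    unfolding P_def using tine_lbl_le[OF F t] by (meson dual_order.trans of_nat_le_iff)
  have eq: "trim_slots F k t = takeWhile P t"
    unfolding trim_slots_def P_def[symmetric] using filter_eq_takeWhile_mono[OF mono] .
  define j where "j = length (takeWhile P t)"
  have "j \<le> length t" unfolding j_def by (rule length_takeWhile_le)
  moreover have "trim_slots F k t = take j t" unfolding eq j_def by (rule takeWhile_eq_take)
  moreover have "\<forall>i<j. P (t ! i)"
  proof (intro allI impI)
    fix i assume "i < j"
    then have "takeWhile P t ! i = t ! i" unfolding j_def by (rule takeWhile_nth)
    moreover have "takeWhile P t ! i \<in> set (takeWhile P t)" using \<open>i < j\<close> unfolding j_def by simp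
    ultimately show "P (t ! i)" by (metis set_takeWhileD)
  qed
  moreover have "\<forall>i. j \<le> i \<and> i < length t \<longrightarrow> \<not> P (t ! i)"
  proof (intro allI impI)
    fix i assume i: "j \<le> i \<and> i < length t"
    then have "j < length t" by simp
    then have "\<not> P (t ! j)" unfolding j_def by (rule nth_length_takeWhile)
    then show "\<not> P (t ! i)" using mono i by blast
  qed
  ultimately show ?thesis unfolding P_def by (intro exI[of _ j]) auto
qed

lemma slot_violation_window:
  assumes "violates_slot_CP k w"
  shows "\<exists>b. k < b \<and> b \<le> length w \<and> (\<forall>c. b - k < c \<and> c \<le> b \<longrightarrow> \<not> cat w c)"
proof -
  obtain F t1 t2 where F: "is_fork w F" and v1: "viable w F t1" and v2: "viable w F t2"
    and le: "tine_lbl F t1 \<le> tine_lbl F t2" and np: "\<not> prefix (trim_slots F k t1) t2"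
    using assms unfolding violates_slot_CP_def by blast
  have t1: "is_tine F t1" and t2: "is_tine F t2" using v1 v2 unfolding viable_def by auto
  define L1 where "L1 = tine_lbl F t1"
  obtain j where j: "j \<le> length t1" "trim_slots F k t1 = take j t1"
    "\<forall>i<j. int (lbl F (t1 ! i)) \<le> int L1 - int k"
    using trim_slots_take[OF F t1, of k] unfolding L1_def by blast
  have ne1: "t1 \<noteq> []" and ne2: "t2 \<noteq> []" using tine_basic(1) t1 t2 by auto
  have j2: "2 \<le> j"
  proof (rule ccontr)
    assume "\<not> 2 \<le> j"
    then consider "j = 0" | "j = 1" by linarith
    then have "prefix (take j t1) t2"
    proof cases
      case 1 then show ?thesis by simp
    next
      case 2
      have "take 1 t1 = take 1 t2" using ne1 ne2 tine_basic(2)[OF t1] tine_basic(2)[OF t2]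
        by (cases t1; cases t2) auto
      then show ?thesis using 2 by (metis take_is_prefix)
    qed
    then show False using np j(2) by simp
  qed
  have vl: "int (lbl F (t1 ! (j - 1))) \<le> int L1 - int k" using j(3) j2 by simp
  have v0: "lbl F (t1 ! 0) < lbl F (t1 ! (j - 1))"
    using tine_lbl_less[OF F t1, of 0 "j - 1"] j2 j(1) by simp
  have "lbl F (t1 ! 0) = 0" using tine_basic(2)[OF t1] root_lbl[OF F] by simp
  then have kL: "k < L1" using v0 vl by linarith
  have Lw: "L1 \<le> length w" unfolding L1_def tine_lbl_def
    using tine_lbl_bound[OF F t1, of "length t1 - 1"] ne1 by (simp add: last_conv_nth)
  show ?thesis
  proof (intro exI[of _ L1] conjI allI impI)
    show "k < L1" "L1 \<le> length w" using kL Lw by auto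
  next
    fix c assume c: "L1 - k < c \<and> c \<le> L1"
    show "\<not> cat w c"
    proof
      assume cc: "cat w c"
      obtain i1 where i1: "i1 < length t1" "lbl F (t1 ! i1) = c"
        using catalan_on_tine[OF F v1 cc] c unfolding L1_def by auto
      obtain i2 where i2: "i2 < length t2" "lbl F (t2 ! i2) = c"
        using catalan_on_tine[OF F v2 cc] c le unfolding L1_def by auto
      have hc: "honest_idx w c" using cat_honest[OF cc] .
      have "t1 ! i1 = hvx F c" using hvx_unique[OF F hc tine_basic(3)[OF t1 i1(1)] i1(2)] .
      moreover have "t2 ! i2 = hvx F c" using hvx_unique[OF F hc tine_basic(3)[OF t2 i2(1)] i2(2)] .
      ultimately have same: "t1 ! i1 = t2 ! i2" by simp
      have tt: "take (Suc i1) t1 = take (Suc i2) t2"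
      proof (rule tine_unique)
        show "is_tine F (take (Suc i1) t1)" "is_tine F (take (Suc i2) t2)"
          using tine_take t1 t2 by auto
        show "last (take (Suc i1) t1) = last (take (Suc i2) t2)"
          using same i1(1) i2(1) by (simp add: take_Suc_conv_app_nth)
      qed
      have "j - 1 < i1"
      proof (rule ccontr)
        assume "\<not> j - 1 < i1"
        then have "lbl F (t1 ! i1) \<le> lbl F (t1 ! (j - 1))"
          using tine_lbl_le[OF F t1, of i1 "j - 1"] j j2 by simp
        then show False using i1(2) vl c by linarith
      qed
      then have "j \<le> Suc i1" by simp
      then have "take j t1 = take j (take (Suc i2) t2)" using tt by (metis min_absorb1 take_take)
      also have "\<dots> = take (min j (Suc i2)) t2" by simp
      finally have "prefix (take j t1) t2" by (metis take_is_prefix)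
      then show False using np j(2) by simp
    qed
  qed
qed

lemma cp_imp_slot:
  assumes "violates_CP k w"
  shows "violates_slot_CP k w"
proof -
  obtain F t1 t2 where F: "is_fork w F" and v1: "viable w F t1" and v2: "viable w F t2"
    and le: "tine_lbl F t1 \<le> tine_lbl F t2" and np: "\<not> prefix (trim_blocks k t1) t2"
    using assms unfolding violates_CP_def by blast
  have t1: "is_tine F t1" using v1 unfolding viable_def by auto
  have ne1: "t1 \<noteq> []" using tine_basic(1) t1 by auto
  obtain j where j: "j \<le> length t1" "trim_slots F k t1 = take j t1"
    "\<forall>i. j \<le> i \<and> i < length t1 \<longrightarrow> int (tine_lbl F t1) - int k < int (lbl F (t1 ! i))"
    using trim_slots_take[OF F t1, of k] by blast
  have jl: "length t1 - k \<le> j"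
  proof (cases "j = length t1")
    case True then show ?thesis by simp
  next
    case False
    then have jl: "j < length t1" using j(1) by simp
    define n where "n = length t1 - 1"
    have ln: "tine_lbl F t1 = lbl F (t1 ! n)" unfolding tine_lbl_def n_def using ne1
      by (simp add: last_conv_nth)
    have "lbl F (t1 ! j) + (n - j) \<le> lbl F (t1 ! n)"
    proof (cases "j = n")
      case True then show ?thesis by simp
    next
      case False
      then show ?thesis using tine_lbl_mono[OF F t1, of j n] jl unfolding n_def by simp
    qed
    moreover have "int (tine_lbl F t1) - int k < int (lbl F (t1 ! j))" using j(3) jl by simp
    ultimately show ?thesis using ln jl unfolding n_def by linarith
  qed
  have "prefix (trim_blocks k t1) (trim_slots F k t1)"
    unfolding trim_blocks_def j(2) using jl by (metis min_absorb1 take_is_prefix take_take)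
  then have "\<not> prefix (trim_slots F k t1) t2" using np prefix_order.trans by blast
  then show ?thesis unfolding violates_slot_CP_def using F v1 v2 le by blast
qed



section \<open>State machine\<close>

type_synonym st = "int \<times> int \<times> int option"

definition stp :: "nat \<Rightarrow> nat \<Rightarrow> nat \<Rightarrow> st \<Rightarrow> bool \<Rightarrow> st" where
  "stp lo hi t s x = (case s of (S, m, tr) \<Rightarrow>
     (S + (if x then 1 else -1), min m (S + (if x then 1 else -1)),
      (case tr of Some a \<Rightarrow> if S + (if x then 1 else -1) = a + 1 then None else Some a
        | None \<Rightarrow> if lo \<le> t \<and> t < hi \<and> S + (if x then 1 else -1) < m
                  then Some (S + (if x then 1 else -1)) else None)))"

definition stf :: "nat \<Rightarrow> nat \<Rightarrow> nat \<times> st \<Rightarrow> bool \<Rightarrow> nat \<times> st" where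
  "stf lo hi p x = (Suc (fst p), stp lo hi (fst p) (snd p) x)"

definition run :: "nat \<Rightarrow> nat \<Rightarrow> bool list \<Rightarrow> st" where
  "run lo hi xs = snd (foldl (stf lo hi) (0, (0, 0, None)) xs)"

lemma foldl_stf_fst: "fst (foldl (stf lo hi) (n, s) xs) = n + length xs"
proof (induction xs arbitrary: n s)
  case Nil then show ?case by simp
next
  case (Cons x xs)
  show ?case using Cons.IH[of "Suc n"] by (simp add: stf_def)
qed

lemma run_Nil: "run lo hi [] = (0, 0, None)"
  by (simp add: run_def)

lemma run_snoc: "run lo hi (xs @ [x]) = stp lo hi (length xs) (run lo hi xs) x"
proof -
  have "fst (foldl (stf lo hi) (0, (0, 0, None)) xs) = length xs"
    using foldl_stf_fst[of lo hi 0 "(0,0,None)" xs] by simp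
  then show ?thesis unfolding run_def by (simp add: stf_def)
qed

lemma ws_snoc: "ws (xs @ [x]) = ws xs + (if x then 1 else -1)"
  by (simp add: ws_def)

definition sinv :: "nat \<Rightarrow> nat \<Rightarrow> bool list \<Rightarrow> st \<Rightarrow> bool" where
  "sinv lo hi xs s \<longleftrightarrow> (case s of (S, m, tr) \<Rightarrow>
     S = ws xs \<and> m \<le> S \<and> (\<forall>j\<le>length xs. m \<le> ws (take j xs)) \<and>
     (length xs \<le> lo \<longrightarrow> tr = None) \<and>
     (\<forall>a. tr = Some a \<longrightarrow> S \<le> a \<and> (\<exists>c. lo < c \<and> c \<le> hi \<and> c \<le> length xs \<and> ws (take c xs) = a \<and>
         (\<forall>j<c. a < ws (take j xs)) \<and> (\<forall>r. c \<le> r \<and> r \<le> length xs \<longrightarrow> ws (take r xs) \<le> a))))"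

lemma run_inv: "sinv lo hi xs (run lo hi xs)"
proof (induction xs rule: rev_induct)
  case Nil
  then show ?case by (simp add: run_Nil sinv_def ws_def)
next
  case (snoc x xs)
  obtain S m tr where s: "run lo hi xs = (S, m, tr)" by (cases "run lo hi xs") auto
  define t where "t = length xs"
  define d :: int where "d = (if x then 1 else -1)"
  have I: "S = ws xs" "m \<le> S" "\<forall>j\<le>t. m \<le> ws (take j xs)" "t \<le> lo \<longrightarrow> tr = None"
    "\<forall>a. tr = Some a \<longrightarrow> S \<le> a \<and> (\<exists>c. lo < c \<and> c \<le> hi \<and> c \<le> t \<and> ws (take c xs) = a \<and>
         (\<forall>j<c. a < ws (take j xs)) \<and> (\<forall>r. c \<le> r \<and> r \<le> t \<longrightarrow> ws (take r xs) \<le> a))"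
    using snoc.IH unfolding s sinv_def t_def by auto
  have tk: "\<And>j. j \<le> t \<Longrightarrow> take j (xs @ [x]) = take j xs" unfolding t_def by simp
  have tk2: "take (Suc t) (xs @ [x]) = xs @ [x]" unfolding t_def by simp
  have wsx: "ws (xs @ [x]) = S + d" using I(1) unfolding d_def by (simp add: ws_snoc)
  have rs: "run lo hi (xs @ [x]) = (S + d, min m (S + d),
      (case tr of Some a \<Rightarrow> if S + d = a + 1 then None else Some a
        | None \<Rightarrow> if lo \<le> t \<and> t < hi \<and> S + d < m then Some (S + d) else None))"
    unfolding run_snoc s stp_def d_def t_def by simp
  have dd: "d = 1 \<or> d = -1" unfolding d_def by simp
  have allj: "\<forall>j\<le>length (xs @ [x]). min m (S + d) \<le> ws (take j (xs @ [x]))"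
  proof (intro allI impI)
    fix j assume "j \<le> length (xs @ [x])"
    then consider "j \<le> t" | "j = Suc t" unfolding t_def by fastforce
    then show "min m (S + d) \<le> ws (take j (xs @ [x]))"
    proof cases
      case 1 then show ?thesis using I(3) tk by fastforce
    next
      case 2 then show ?thesis using tk2 wsx by simp
    qed
  qed
  show ?case
  proof (cases tr)
    case None
    show ?thesis
    proof (cases "lo \<le> t \<and> t < hi \<and> S + d < m")
      case True
      have "\<exists>c. lo < c \<and> c \<le> hi \<and> c \<le> length (xs @ [x]) \<and> ws (take c (xs @ [x])) = S + d \<and>
         (\<forall>j<c. S + d < ws (take j (xs @ [x]))) \<and>
         (\<forall>r. c \<le> r \<and> r \<le> length (xs @ [x]) \<longrightarrow> ws (take r (xs @ [x])) \<le> S + d)"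
      proof (intro exI[of _ "Suc t"] conjI allI impI)
        show "lo < Suc t" "Suc t \<le> hi" "Suc t \<le> length (xs @ [x])" using True t_def by auto
        show "ws (take (Suc t) (xs @ [x])) = S + d" using tk2 wsx by simp
      next
        fix j assume "j < Suc t"
        then have "j \<le> t" by simp
        then have "m \<le> ws (take j (xs @ [x]))" using I(3) tk by simp
        then show "S + d < ws (take j (xs @ [x]))" using True by simp
      next
        fix r assume "Suc t \<le> r \<and> r \<le> length (xs @ [x])"
        then have "r = Suc t" unfolding t_def by simp
        then show "ws (take r (xs @ [x])) \<le> S + d" using tk2 wsx by simp
      qed
      then show ?thesis unfolding sinv_def rs using None True wsx allj by auto
    next
      case False
      then show ?thesis unfolding sinv_def rs using None wsx allj I(2) dd t_def by auto
    qed
  next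
    case (Some a)
    have Sa: "S \<le> a" and ex: "\<exists>c. lo < c \<and> c \<le> hi \<and> c \<le> t \<and> ws (take c xs) = a \<and>
         (\<forall>j<c. a < ws (take j xs)) \<and> (\<forall>r. c \<le> r \<and> r \<le> t \<longrightarrow> ws (take r xs) \<le> a)"
      using I(5) Some by auto
    have nlo: "\<not> t \<le> lo \<or> False" using I(4) Some by auto
    show ?thesis
    proof (cases "S + d = a + 1")
      case True
      then show ?thesis unfolding sinv_def rs using Some wsx allj I(2) dd by auto
    next
      case False
      then have Sda: "S + d \<le> a" using Sa dd by auto
      from ex obtain c where c: "lo < c" "c \<le> hi" "c \<le> t" "ws (take c xs) = a"
        "\<forall>j<c. a < ws (take j xs)" "\<forall>r. c \<le> r \<and> r \<le> t \<longrightarrow> ws (take r xs) \<le> a" by blast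
      have "\<exists>c. lo < c \<and> c \<le> hi \<and> c \<le> length (xs @ [x]) \<and> ws (take c (xs @ [x])) = a \<and>
         (\<forall>j<c. a < ws (take j (xs @ [x]))) \<and>
         (\<forall>r. c \<le> r \<and> r \<le> length (xs @ [x]) \<longrightarrow> ws (take r (xs @ [x])) \<le> a)"
      proof (intro exI[of _ c] conjI allI impI)
        show "lo < c" "c \<le> hi" "c \<le> length (xs @ [x])" using c t_def by auto
        show "ws (take c (xs @ [x])) = a" using c tk by simp
      next
        fix j assume "j < c" then show "a < ws (take j (xs @ [x]))" using c tk by simp
      next
        fix r assume r: "c \<le> r \<and> r \<le> length (xs @ [x])"
        then consider "r \<le> t" | "r = Suc t" unfolding t_def by fastforce
        then show "ws (take r (xs @ [x])) \<le> a"
        proof cases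
          case 1 then show ?thesis using c r tk by simp
        next
          case 2 then show ?thesis using tk2 wsx Sda by simp
        qed
      qed
      then show ?thesis unfolding sinv_def rs using Some False wsx allj I(2) dd nlo Sda t_def
        by auto
    qed
  qed
qed

lemma run_cat:
  assumes "run lo hi w = (S, m, Some a)"
  shows "\<exists>c. lo < c \<and> c \<le> hi \<and> cat w c"
proof -
  have "sinv lo hi w (run lo hi w)" by (rule run_inv)
  then obtain c where c: "lo < c" "c \<le> hi" "c \<le> length w" "ws (take c w) = a"
    "\<forall>j<c. a < ws (take j w)" "\<forall>r. c \<le> r \<and> r \<le> length w \<longrightarrow> ws (take r w) \<le> a"
    unfolding assms sinv_def by auto
  have "cat w c" unfolding cat_def Sx_def using c by auto
  then show ?thesis using c by blast
qed



definition nu :: "real \<Rightarrow> real" where "nu e = 1 + e^2/2"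
definition lam1 :: "real \<Rightarrow> real" where "lam1 e = 1 + e"
definition lam :: "real \<Rightarrow> real" where "lam e = (1 + e) / (1 - e)"
definition pp :: "real \<Rightarrow> real" where "pp e = (1 - e) / 2"
definition qq :: "real \<Rightarrow> real" where "qq e = (1 + e) / 2"
definition rr :: "real \<Rightarrow> real" where "rr e = 1 - e^3/4"
definition aa :: "real \<Rightarrow> real" where "aa e = e^3/4 + e^2/4"

lemma I1: assumes "0 < e" "e < 1" shows "pp e * nu e ^ 2 + qq e \<le> rr e * nu e"
proof -
  have eq: "8 * (rr e * nu e - (pp e * nu e ^ 2 + qq e)) = e^3 * (2 - e)"
    unfolding rr_def nu_def pp_def qq_def by (simp add: field_simps power2_eq_square power3_eq_cube)
  moreover have "0 \<le> e^3 * (2 - e)" using assms by simp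
  ultimately have "0 \<le> 8 * (rr e * nu e - (pp e * nu e ^ 2 + qq e))" by simp
  then show ?thesis by simp
qed

lemma I2: assumes "0 < e" "e < 1" shows "pp e * nu e + qq e * (nu e / lam1 e) \<le> rr e"
proof -
  have "qq e * (nu e / lam1 e) = nu e / 2" unfolding qq_def lam1_def using assms by (simp add: field_simps)
  moreover have "4 * (rr e - (pp e * nu e + nu e / 2)) = 2 * e - 2 * e^2"
    unfolding rr_def nu_def pp_def by (simp add: field_simps power2_eq_square power3_eq_cube)
  moreover have "e^2 \<le> e" using assms by (simp add: power2_eq_square)
  ultimately have "0 \<le> 4 * (rr e - (pp e * nu e + qq e * (nu e / lam1 e)))" by simp
  then show ?thesis by simp
qed

lemma I3: assumes "0 < e" "e < 1" shows "pp e * lam1 e + qq e * (nu e / lam1 e) \<le> rr e"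
proof -
  have "qq e * (nu e / lam1 e) = nu e / 2" unfolding qq_def lam1_def using assms by (simp add: field_simps)
  moreover have "4 * (rr e - (pp e * lam1 e + nu e / 2)) = e^2 - e^3"
    unfolding rr_def nu_def pp_def lam1_def by (simp add: field_simps power2_eq_square power3_eq_cube)
  moreover have "e^3 \<le> e^2" using assms by (simp add: power2_eq_square power3_eq_cube mult_le_cancel_left1)
  ultimately have "0 \<le> 4 * (rr e - (pp e * lam1 e + qq e * (nu e / lam1 e)))" by simp
  then show ?thesis by simp
qed

lemma I3': assumes "0 < e" "e < 1" shows "pp e * lam1 e + qq e * (1 / lam1 e) \<le> rr e"
proof -
  have "1 \<le> nu e" unfolding nu_def by simp
  then have "qq e * (1 / lam1 e) \<le> qq e * (nu e / lam1 e)"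
    using assms unfolding qq_def lam1_def by (intro mult_left_mono divide_right_mono) auto
  then show ?thesis using I3[OF assms] by linarith
qed

lemma Ipre: assumes "0 < e" "e < 1" shows "pp e * nu e + qq e \<le> rr e + aa e"
proof -
  have "4 * (rr e + aa e - (pp e * nu e + qq e)) = e^3"
    unfolding rr_def nu_def pp_def qq_def aa_def by (simp add: field_simps power2_eq_square power3_eq_cube)
  moreover have "0 \<le> e^3" using assms by simp
  ultimately have "0 \<le> 4 * (rr e + aa e - (pp e * nu e + qq e))" by simp
  then show ?thesis by simp
qed

lemma IK: assumes "0 < e" "e < 1" shows "rr e * (1 + 1/e) + aa e = 1 + 1/e"
  unfolding rr_def aa_def using assms by (simp add: field_simps power2_eq_square power3_eq_cube)

lemma Ilam: assumes "0 < e" "e < 1" shows "pp e * lam e + qq e * (1 / lam e) = 1"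
proof -
  have "e * e \<noteq> 1" using assms by (metis less_irrefl mult_strict_mono' mult_1 le_less)
  then show ?thesis unfolding pp_def qq_def lam_def using assms by (simp add: field_simps)
qed

lemma params:
  assumes "0 < e" "e < 1"
  shows "1 \<le> nu e" "1 \<le> lam1 e" "1 \<le> lam e" "lam1 e \<le> lam e" "nu e \<le> lam1 e ^ 2"
    "0 < pp e" "0 < qq e" "pp e + qq e = 1" "0 \<le> rr e" "rr e \<le> 1" "0 \<le> aa e"
proof -
  show "1 \<le> nu e" unfolding nu_def by simp
  show "1 \<le> lam1 e" unfolding lam1_def using assms by simp
  show "lam1 e \<le> lam e" unfolding lam1_def lam_def using assms
    by (simp add: field_simps mult_le_cancel_left1)
  then show "1 \<le> lam e" using \<open>1 \<le> lam1 e\<close> by simp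
  show "nu e \<le> lam1 e ^ 2" unfolding nu_def lam1_def using assms by (simp add: power2_eq_square algebra_simps)
  show "0 < pp e" "0 < qq e" "pp e + qq e = 1" unfolding pp_def qq_def using assms by (auto simp: field_simps)
  have "e^3 \<le> 1" using assms by (simp add: power_le_one)
  then show "0 \<le> rr e" unfolding rr_def by simp
  show "rr e \<le> 1" unfolding rr_def using assms by simp
  show "0 \<le> aa e" unfolding aa_def using assms by simp
qed


section \<open>Potentials\<close>

definition Phi :: "real \<Rightarrow> st \<Rightarrow> real" where
  "Phi e s = (case s of (S, m, tr) \<Rightarrow> (case tr of None \<Rightarrow> nu e ^ nat (S - m)
     | Some a \<Rightarrow> nu e ^ nat (a + 1 - m) / lam1 e ^ nat (a + 1 - S)))"

definition Psi :: "real \<Rightarrow> st \<Rightarrow> real" where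
  "Psi e s = (case s of (S, m, tr) \<Rightarrow> (case tr of None \<Rightarrow> 1
     | Some a \<Rightarrow> 1 / lam e ^ nat (a + 1 - S)))"

definition good :: "st \<Rightarrow> bool" where
  "good s \<longleftrightarrow> (case s of (S, m, tr) \<Rightarrow> m \<le> S \<and> (\<forall>a. tr = Some a \<longrightarrow> S \<le> a))"

lemma run_good: "good (run lo hi xs)"
  using run_inv[of lo hi xs] unfolding sinv_def good_def by (auto split: prod.splits)

lemma run_pre_None: "length xs \<le> lo \<Longrightarrow> snd (snd (run lo hi xs)) = None"
  using run_inv[of lo hi xs] unfolding sinv_def by (auto split: prod.splits)

lemma Phi_nonneg: "0 < e \<Longrightarrow> e < 1 \<Longrightarrow> 0 \<le> Phi e s"
  using params[of e] unfolding Phi_def by (auto split: prod.splits option.splits)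

lemma Psi_nonneg: "0 < e \<Longrightarrow> e < 1 \<Longrightarrow> 0 \<le> Psi e s"
  using params[of e] unfolding Psi_def by (auto split: prod.splits option.splits)

lemma Psi_le_Phi:
  assumes e: "0 < e" "e < 1" and g: "good s"
  shows "Psi e s \<le> Phi e s"
proof -
  obtain S m tr where s: "s = (S, m, tr)" by (cases s) auto
  note pa = params[OF e]
  show ?thesis
  proof (cases tr)
    case None
    then show ?thesis unfolding s Psi_def Phi_def using pa by (simp add: one_le_power)
  next
    case (Some a)
    define x where "x = nat (a + 1 - S)"
    define y where "y = nat (a + 1 - m)"
    have "1 / lam e ^ x \<le> 1 / lam1 e ^ x"
      using pa by (intro divide_left_mono power_mono mult_pos_pos) auto
    also have "\<dots> \<le> nu e ^ y / lam1 e ^ x"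
      using pa by (intro divide_right_mono one_le_power) auto
    finally show ?thesis unfolding s Psi_def Phi_def Some x_def y_def by simp
  qed
qed

lemma step_window:
  assumes e: "0 < e" "e < 1" and g: "good s" and t: "lo \<le> t" "t < hi"
  shows "Phi e (stp lo hi t s False) \<le> Phi e (stp lo hi t s True) \<and>
    pp e * Phi e (stp lo hi t s True) + qq e * Phi e (stp lo hi t s False) \<le> rr e * Phi e s"
proof -
  obtain S m tr where s: "s = (S, m, tr)" by (cases s) auto
  note pa = params[OF e]
  have mS: "m \<le> S" using g unfolding s good_def by simp
  show ?thesis
  proof (cases tr)
    case None
    obtain d where d: "S - m = int d" using mS nonneg_int_cases[of "S - m"] by auto
    have nS: "nat (S + 1 - m) = Suc d" using d by simp
    have up: "Phi e (stp lo hi t s True) = nu e ^ Suc d"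
      unfolding s None stp_def Phi_def using mS d nS by simp
    have ps: "Phi e s = nu e ^ d" unfolding s None Phi_def using d by simp
    show ?thesis
    proof (cases d)
      case 0
      have dn: "Phi e (stp lo hi t s False) = nu e / lam1 e"
        unfolding s None stp_def Phi_def using d t 0 by simp
      have "nu e / lam1 e \<le> nu e" using pa by (simp add: divide_le_eq)
      then show ?thesis using I2[OF e] unfolding up dn ps 0 by simp
    next
      case (Suc d')
      have nS2: "nat (S - 1 - m) = d'" using d Suc by simp
      have dn: "Phi e (stp lo hi t s False) = nu e ^ d'"
        unfolding s None stp_def Phi_def using d Suc nS2 by simp
      have "nu e ^ d' * (pp e * nu e ^ 2 + qq e) \<le> nu e ^ d' * (rr e * nu e)"
        using I1[OF e] pa by (intro mult_left_mono) auto
      then have "pp e * nu e ^ Suc (Suc d') + qq e * nu e ^ d' \<le> rr e * nu e ^ Suc d'"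
        by (simp add: algebra_simps power2_eq_square)
      moreover have "nu e ^ d' \<le> nu e ^ Suc (Suc d')" using pa by (intro power_increasing) auto
      ultimately show ?thesis unfolding up dn ps Suc by simp
    qed
  next
    case (Some a)
    have Sa: "S \<le> a" using g unfolding s Some good_def by simp
    obtain n where n: "a + 1 - S = int n" using Sa nonneg_int_cases[of "a + 1 - S"] by auto
    then obtain x' where x: "a + 1 - S = int (Suc x')" using Sa by (cases n) auto
    obtain y where y: "a + 1 - m = int y" using Sa mS nonneg_int_cases[of "a + 1 - m"] by auto
    have nx: "nat (a + 1 - S) = Suc x'" using x by (simp only: nat_int)
    have ny: "nat (a + 1 - m) = y" using y by (simp only: nat_int)
    have mm: "min m (S + 1) = m" using mS by simp
    define c where "c = nu e ^ y / lam1 e ^ Suc x'"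
    have cpos: "0 < c" unfolding c_def using pa by simp
    have ps: "Phi e s = c" unfolding s Some Phi_def c_def using nx ny by simp
    have up: "Phi e (stp lo hi t s True) = c * lam1 e"
    proof (cases x')
      case 0
      then have "S + 1 = a + 1" using x by simp
      then have "S + 1 - m = a + 1 - m" by simp
      then show ?thesis unfolding s Some stp_def Phi_def c_def using ny 0 pa \<open>S + 1 = a + 1\<close> mm by simp
    next
      case (Suc x'')
      then have "S + 1 \<noteq> a + 1" using x by simp
      moreover have "nat (a + 1 - (S + 1)) = x'" using x by simp
      ultimately show ?thesis unfolding s Some stp_def Phi_def c_def using ny pa mm
        by (simp add: field_simps)
    qed
    define dl :: nat where "dl = (if S = m then 1 else 0)"
    have dn: "Phi e (stp lo hi t s False) = c * (nu e ^ dl / lam1 e)"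
    proof -
      have "S - 1 \<noteq> a + 1" using Sa by simp
      moreover have "nat (a + 1 - (S - 1)) = Suc (Suc x')" using x by simp
      moreover have "nat (a + 1 - min m (S - 1)) = y + dl" unfolding dl_def using y mS by auto
      ultimately show ?thesis unfolding s Some stp_def Phi_def c_def using pa
        by (simp add: field_simps power_add)
    qed
    have nd: "nu e ^ dl \<le> nu e" unfolding dl_def using pa by simp
    have f1: "pp e * lam1 e + qq e * (nu e ^ dl / lam1 e) \<le> rr e"
    proof -
      have "qq e * (nu e ^ dl / lam1 e) \<le> qq e * (nu e / lam1 e)"
        using nd pa by (intro mult_left_mono divide_right_mono) auto
      then show ?thesis using I3[OF e] by linarith
    qed
    have f2: "nu e ^ dl / lam1 e \<le> lam1 e"
    proof -
      have "nu e ^ dl \<le> lam1 e ^ 2" using nd pa by linarith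
      then show ?thesis using pa by (simp add: divide_le_eq power2_eq_square)
    qed
    have "pp e * (c * lam1 e) + qq e * (c * (nu e ^ dl / lam1 e)) = c * (pp e * lam1 e + qq e * (nu e ^ dl / lam1 e))"
      by (simp add: algebra_simps)
    also have "\<dots> \<le> c * rr e" using f1 cpos by (intro mult_left_mono) auto
    finally have A: "pp e * (c * lam1 e) + qq e * (c * (nu e ^ dl / lam1 e)) \<le> rr e * c" by (simp only: mult.commute)
    have B: "c * (nu e ^ dl / lam1 e) \<le> c * lam1 e" using f2 cpos by (intro mult_left_mono) auto
    show ?thesis unfolding up dn ps using A B by blast
  qed
qed


lemma step_pre:
  assumes e: "0 < e" "e < 1" and g: "good s" and t: "t < lo" and n: "snd (snd s) = None"
  shows "Phi e (stp lo hi t s False) \<le> Phi e (stp lo hi t s True) \<and>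
    pp e * Phi e (stp lo hi t s True) + qq e * Phi e (stp lo hi t s False) \<le> rr e * Phi e s + aa e"
proof -
  obtain S m where s: "s = (S, m, None)" using n by (cases s) auto
  note pa = params[OF e]
  have mS: "m \<le> S" using g unfolding s good_def by simp
  obtain d where d: "S - m = int d" using mS nonneg_int_cases[of "S - m"] by auto
  have nS: "nat (S + 1 - m) = Suc d" using d by simp
  have up: "Phi e (stp lo hi t s True) = nu e ^ Suc d"
    unfolding s stp_def Phi_def using mS d nS by simp
  have ps: "Phi e s = nu e ^ d" unfolding s Phi_def using d by simp
  show ?thesis
  proof (cases d)
    case 0
    have dn: "Phi e (stp lo hi t s False) = 1"
      unfolding s stp_def Phi_def using d t 0 by simp
    show ?thesis using Ipre[OF e] pa unfolding up dn ps 0 by simp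
  next
    case (Suc d')
    have nS2: "nat (S - 1 - m) = d'" using d Suc by simp
    have dn: "Phi e (stp lo hi t s False) = nu e ^ d'"
      unfolding s stp_def Phi_def using d Suc nS2 by simp
    have "nu e ^ d' * (pp e * nu e ^ 2 + qq e) \<le> nu e ^ d' * (rr e * nu e)"
      using I1[OF e] pa by (intro mult_left_mono) auto
    then have "pp e * nu e ^ Suc (Suc d') + qq e * nu e ^ d' \<le> rr e * nu e ^ Suc d'"
      by (simp add: algebra_simps power2_eq_square)
    moreover have "nu e ^ d' \<le> nu e ^ Suc (Suc d')" using pa by (intro power_increasing) auto
    ultimately show ?thesis unfolding up dn ps Suc using pa by simp
  qed
qed

lemma step_post:
  assumes e: "0 < e" "e < 1" and g: "good s" and t: "hi \<le> t"
  shows "Psi e (stp lo hi t s False) \<le> Psi e (stp lo hi t s True) \<and>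
    pp e * Psi e (stp lo hi t s True) + qq e * Psi e (stp lo hi t s False) \<le> Psi e s"
proof -
  obtain S m tr where s: "s = (S, m, tr)" by (cases s) auto
  note pa = params[OF e]
  have mS: "m \<le> S" using g unfolding s good_def by simp
  show ?thesis
  proof (cases tr)
    case None
    have "Psi e (stp lo hi t s True) = 1" "Psi e (stp lo hi t s False) = 1" "Psi e s = 1"
      unfolding s None stp_def Psi_def using t by auto
    then show ?thesis using pa by simp
  next
    case (Some a)
    have Sa: "S \<le> a" using g unfolding s Some good_def by simp
    obtain n where n: "a + 1 - S = int n" using Sa nonneg_int_cases[of "a + 1 - S"] by auto
    then obtain x' where x: "a + 1 - S = int (Suc x')" using Sa by (cases n) auto
    have nx: "nat (a + 1 - S) = Suc x'" using x by (simp only: nat_int)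
    define c where "c = 1 / lam e ^ Suc x'"
    have cpos: "0 < c" unfolding c_def using pa by simp
    have ps: "Psi e s = c" unfolding s Some Psi_def c_def using nx by simp
    have up: "Psi e (stp lo hi t s True) = c * lam e"
    proof (cases x')
      case 0
      then have "S + 1 = a + 1" using x by simp
      then show ?thesis unfolding s Some stp_def Psi_def c_def using 0 pa by simp
    next
      case (Suc x'')
      then have "S + 1 \<noteq> a + 1" using x by simp
      moreover have "nat (a + 1 - (S + 1)) = x'" using x by simp
      ultimately show ?thesis unfolding s Some stp_def Psi_def c_def using pa
        by (simp add: field_simps)
    qed
    have dn: "Psi e (stp lo hi t s False) = c * (1 / lam e)"
    proof -
      have "S - 1 \<noteq> a + 1" using Sa by simp
      moreover have "nat (a + 1 - (S - 1)) = Suc (Suc x')" using x by simp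
      ultimately show ?thesis unfolding s Some stp_def Psi_def c_def using pa
        by (simp add: field_simps)
    qed
    have "pp e * (c * lam e) + qq e * (c * (1 / lam e)) = c * (pp e * lam e + qq e * (1 / lam e))"
      by (simp add: algebra_simps)
    also have "\<dots> = c" using Ilam[OF e] by simp
    finally have A: "pp e * (c * lam e) + qq e * (c * (1 / lam e)) \<le> c" by simp
    have "1 / lam e \<le> lam e" using pa by (simp add: divide_le_eq) (metis dual_order.trans mult_mono one_le_numeral order_refl zero_le_one mult_1 less_le_trans)
    then have B: "c * (1 / lam e) \<le> c * lam e" using cpos by (intro mult_left_mono) auto
    show ?thesis unfolding up dn ps using A B by blast
  qed
qed




definition Pr :: "bool list pmf \<Rightarrow> bool list \<Rightarrow> real" where
  "Pr p xs = measure_pmf.prob p {w. take (length xs) w = xs}"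

definition ES :: "bool list pmf \<Rightarrow> nat \<Rightarrow> (bool list \<Rightarrow> real) \<Rightarrow> real" where
  "ES p n f = (\<Sum>xs\<in>{xs. length xs = n}. Pr p xs * f xs)"

lemma fin_len: "finite {xs :: bool list. length xs = n}"
  using finite_lists_length_eq[of "UNIV :: bool set" n] by simp

lemma E_eq:
  assumes sp: "set_pmf p \<subseteq> {w. length w = T}" and n: "n \<le> T"
  shows "measure_pmf.expectation p (\<lambda>w. f (take n w)) = ES p n f"
proof -
  have "measure_pmf.expectation p (\<lambda>w. f (take n w)) = measure_pmf.expectation (map_pmf (take n) p) f"
    by simp
  also have "\<dots> = (\<Sum>xs\<in>{xs. length xs = n}. pmf (map_pmf (take n) p) xs *\<^sub>R f xs)"
  proof (rule integral_measure_pmf)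
    show "finite {xs :: bool list. length xs = n}" by (rule fin_len)
  next
    fix a assume "a \<in> set_pmf (map_pmf (take n) p)"
    then obtain w where "w \<in> set_pmf p" "a = take n w" by auto
    then show "a \<in> {xs. length xs = n}" using sp n by auto
  qed
  also have "\<dots> = ES p n f" unfolding ES_def
  proof (rule sum.cong)
    fix xs assume "xs \<in> {xs :: bool list. length xs = n}"
    then have "take n -` {xs} = {w. take (length xs) w = xs}" by auto
    then show "pmf (map_pmf (take n) p) xs *\<^sub>R f xs = Pr p xs * f xs"
      unfolding Pr_def by (simp add: pmf_map)
  qed simp
  finally show ?thesis .
qed

lemma Pr_nonneg: "0 \<le> Pr p xs" unfolding Pr_def by simp

lemma ES_one:
  assumes sp: "set_pmf p \<subseteq> {w. length w = T}" and n: "n \<le> T"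
  shows "ES p n (\<lambda>_. 1) = 1"
  using E_eq[OF sp n, of "\<lambda>_. 1"] by simp

lemma ES_mono: "(\<And>xs. length xs = n \<Longrightarrow> f xs \<le> g xs) \<Longrightarrow> ES p n f \<le> ES p n g"
  unfolding ES_def by (intro sum_mono mult_left_mono) (auto simp: Pr_nonneg)

lemma ES_lin: "ES p n (\<lambda>xs. r * f xs + c) = r * ES p n f + c * ES p n (\<lambda>_. 1)"
  unfolding ES_def by (simp add: algebra_simps sum.distrib sum_distrib_left)

lemma ES_scale: "ES p n (\<lambda>xs. r * f xs) = r * ES p n f"
  unfolding ES_def by (simp add: algebra_simps sum_distrib_left)

lemma Pr_snoc:
  assumes sp: "set_pmf p \<subseteq> {w. length w = T}" and t: "length xs = t" "t < T"
  shows "Pr p (xs @ [b]) = measure_pmf.prob p {w. take t w = xs \<and> w ! t = b}"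
proof -
  have "{w. take (length (xs @ [b])) w = xs @ [b]} \<inter> set_pmf p = {w. take t w = xs \<and> w ! t = b} \<inter> set_pmf p"
  proof (intro equalityI subsetI)
    fix w assume w: "w \<in> {w. take (length (xs @ [b])) w = xs @ [b]} \<inter> set_pmf p"
    then have "length w = T" using sp by auto
    then have "take (Suc t) w = take t w @ [w ! t]" using t by (simp add: take_Suc_conv_app_nth)
    then show "w \<in> {w. take t w = xs \<and> w ! t = b} \<inter> set_pmf p" using w t by auto
  next
    fix w assume w: "w \<in> {w. take t w = xs \<and> w ! t = b} \<inter> set_pmf p"
    then have "length w = T" using sp by auto
    then have "take (Suc t) w = take t w @ [w ! t]" using t by (simp add: take_Suc_conv_app_nth)
    then show "w \<in> {w. take (length (xs @ [b])) w = xs @ [b]} \<inter> set_pmf p" using w t by auto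
  qed
  then have "measure_pmf.prob p ({w. take (length (xs @ [b])) w = xs @ [b]} \<inter> set_pmf p) =
    measure_pmf.prob p ({w. take t w = xs \<and> w ! t = b} \<inter> set_pmf p)" by simp
  then show ?thesis unfolding Pr_def measure_Int_set_pmf .
qed

lemma Pr_split:
  assumes sp: "set_pmf p \<subseteq> {w. length w = T}" and t: "length xs = t" "t < T"
  shows "Pr p (xs @ [True]) + Pr p (xs @ [False]) = Pr p xs"
proof -
  have "Pr p (xs @ [True]) + Pr p (xs @ [False]) =
     measure_pmf.prob p {w. take t w = xs \<and> w ! t = True} + measure_pmf.prob p {w. take t w = xs \<and> w ! t = False}"
    using Pr_snoc[OF sp t] by simp
  also have "\<dots> = measure_pmf.prob p ({w. take t w = xs \<and> w ! t = True} \<union> {w. take t w = xs \<and> w ! t = False})"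
    by (rule measure_pmf.finite_measure_Union[symmetric]) auto
  also have "{w. take t w = xs \<and> w ! t = True} \<union> {w. take t w = xs \<and> w ! t = False} = {w. take (length xs) w = xs}"
    using t by auto
  finally show ?thesis unfolding Pr_def .
qed

lemma Pr_mart:
  assumes sp: "set_pmf p \<subseteq> {w. length w = T}" and m: "eps_martingale e T p" and t: "length xs = t" "t < T"
  shows "Pr p (xs @ [True]) \<le> pp e * Pr p xs"
proof -
  have "Pr p (xs @ [True]) = measure_pmf.prob p {w. take t w = xs \<and> w ! t}"
    using Pr_snoc[OF sp t, of True] by simp
  also have "\<dots> \<le> (1 - e) / 2 * measure_pmf.prob p {w. take t w = xs}"
    using m t unfolding eps_martingale_def by blast
  finally show ?thesis unfolding pp_def Pr_def using t by simp
qed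

lemma sum_len_Suc:
  "(\<Sum>ys\<in>{ys :: bool list. length ys = Suc t}. F ys) =
   (\<Sum>xs\<in>{xs. length xs = t}. F (xs @ [True]) + F (xs @ [False]))"
proof -
  define L where "L = {xs :: bool list. length xs = t}"
  have eq: "{ys :: bool list. length ys = Suc t} = (\<lambda>xs. xs @ [True]) ` L \<union> (\<lambda>xs. xs @ [False]) ` L"
  proof (intro equalityI subsetI)
    fix ys :: "bool list" assume "ys \<in> {ys. length ys = Suc t}"
    then have l: "length ys = Suc t" by simp
    obtain zs b where ys: "ys = zs @ [b]" using l by (cases ys rule: rev_exhaust) auto
    have zl: "zs \<in> L" unfolding L_def using l ys by simp
    show "ys \<in> (\<lambda>xs. xs @ [True]) ` L \<union> (\<lambda>xs. xs @ [False]) ` L"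
    proof (cases b)
      case True
      show ?thesis by (rule UnI1, rule rev_image_eqI[OF zl]) (simp add: ys True)
    next
      case False
      show ?thesis by (rule UnI2, rule rev_image_eqI[OF zl]) (simp add: ys False)
    qed
  qed (auto simp: L_def)
  have d: "(\<lambda>xs. xs @ [True]) ` L \<inter> (\<lambda>xs. xs @ [False]) ` L = {}" by auto
  have i1: "inj_on (\<lambda>xs. xs @ [True]) L" by (auto simp: inj_on_def)
  have i2: "inj_on (\<lambda>xs. xs @ [False]) L" by (auto simp: inj_on_def)
  have fL: "finite L" unfolding L_def by (rule fin_len)
  have "(\<Sum>ys\<in>(\<lambda>xs. xs @ [True]) ` L \<union> (\<lambda>xs. xs @ [False]) ` L. F ys) =
     (\<Sum>ys\<in>(\<lambda>xs. xs @ [True]) ` L. F ys) + (\<Sum>ys\<in>(\<lambda>xs. xs @ [False]) ` L. F ys)"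
    by (rule sum.union_disjoint[OF finite_imageI[OF fL] finite_imageI[OF fL] d])
  also have "\<dots> = (\<Sum>xs\<in>L. F (xs @ [True])) + (\<Sum>xs\<in>L. F (xs @ [False]))"
    by (simp add: sum.reindex[OF i1] sum.reindex[OF i2])
  also have "\<dots> = (\<Sum>xs\<in>L. F (xs @ [True]) + F (xs @ [False]))" by (simp add: sum.distrib)
  finally show ?thesis unfolding eq L_def .
qed

lemma ES_step:
  assumes sp: "set_pmf p \<subseteq> {w. length w = T}" and m: "eps_martingale e T p" and t: "t < T"
    and g: "\<And>xs. length xs = t \<Longrightarrow> 0 \<le> g (xs @ [False]) \<and> g (xs @ [False]) \<le> g (xs @ [True]) \<and>
       pp e * g (xs @ [True]) + qq e * g (xs @ [False]) \<le> h xs"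
    and pq: "pp e + qq e = 1"
  shows "ES p (Suc t) g \<le> ES p t h"
proof -
  have "ES p (Suc t) g = (\<Sum>xs\<in>{xs. length xs = t}. Pr p (xs @ [True]) * g (xs @ [True]) + Pr p (xs @ [False]) * g (xs @ [False]))"
    unfolding ES_def by (rule sum_len_Suc)
  also have "\<dots> \<le> (\<Sum>xs\<in>{xs. length xs = t}. Pr p xs * h xs)"
  proof (rule sum_mono)
    fix xs :: "bool list" assume "xs \<in> {xs. length xs = t}"
    then have lx: "length xs = t" by simp
    define a where "a = Pr p (xs @ [True])"
    define b where "b = Pr p (xs @ [False])"
    define P where "P = Pr p xs"
    define gT where "gT = g (xs @ [True])"
    define gF where "gF = g (xs @ [False])"
    have ab: "a + b = P" unfolding a_def b_def P_def using Pr_split[OF sp lx t] .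
    have aP: "a \<le> pp e * P" unfolding a_def P_def using Pr_mart[OF sp m lx t] .
    have gg: "0 \<le> gF" "gF \<le> gT" "pp e * gT + qq e * gF \<le> h xs" using g[OF lx] unfolding gT_def gF_def by auto
    have P0: "0 \<le> P" unfolding P_def by (rule Pr_nonneg)
    have "a * gT + b * gF = a * (gT - gF) + P * gF" using ab[symmetric] by (simp add: algebra_simps)
    also have "\<dots> \<le> pp e * P * (gT - gF) + P * gF"
    proof -
      have "a * (gT - gF) \<le> pp e * P * (gT - gF)" by (rule mult_right_mono) (use aP gg in auto)
      then show ?thesis by linarith
    qed
    also have "\<dots> = P * (pp e * gT + qq e * gF)"
    proof -
      have qe: "qq e = 1 - pp e" using pq by linarith
      show ?thesis unfolding qe by (simp add: algebra_simps)
    qed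
    also have "\<dots> \<le> P * h xs" using gg P0 by (intro mult_left_mono) auto
    finally show "Pr p (xs @ [True]) * g (xs @ [True]) + Pr p (xs @ [False]) * g (xs @ [False]) \<le> Pr p xs * h xs"
      unfolding a_def b_def P_def gT_def gF_def .
  qed
  finally show ?thesis unfolding ES_def .
qed


locale setting =
  fixes p :: "bool list pmf" and T :: nat and e :: real
  assumes sp: "set_pmf p \<subseteq> {w. length w = T}" and mart: "eps_martingale e T p"
    and e0: "0 < e" and e1: "e < 1"
begin

lemma pq1: "pp e + qq e = 1" using params[OF e0 e1] by simp

lemma chain_pre: "t \<le> lo \<Longrightarrow> t \<le> T \<Longrightarrow> ES p t (\<lambda>xs. Phi e (run lo hi xs)) \<le> 1 + 1 / e"
proof (induction t)
  case 0
  have "ES p 0 (\<lambda>xs. Phi e (run lo hi xs)) \<le> ES p 0 (\<lambda>_. 1)"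
    by (rule ES_mono) (simp add: run_Nil Phi_def)
  also have "\<dots> = 1" using ES_one[OF sp] by simp
  moreover have "0 \<le> 1 / e" using e0 by simp
  ultimately show ?case by linarith
next
  case (Suc t)
  have tl: "t < lo" "t < T" using Suc.prems by auto
  have "ES p (Suc t) (\<lambda>xs. Phi e (run lo hi xs)) \<le> ES p t (\<lambda>xs. rr e * Phi e (run lo hi xs) + aa e)"
  proof (rule ES_step[OF sp mart tl(2) _ pq1])
    fix xs :: "bool list" assume lx: "length xs = t"
    have g: "good (run lo hi xs)" by (rule run_good)
    have n: "snd (snd (run lo hi xs)) = None" using run_pre_None[of xs lo hi] lx tl by simp
    show "0 \<le> Phi e (run lo hi (xs @ [False])) \<and>
          Phi e (run lo hi (xs @ [False])) \<le> Phi e (run lo hi (xs @ [True])) \<and>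
          pp e * Phi e (run lo hi (xs @ [True])) + qq e * Phi e (run lo hi (xs @ [False]))
          \<le> rr e * Phi e (run lo hi xs) + aa e"
      using step_pre[OF e0 e1 g tl(1) n] Phi_nonneg[OF e0 e1] unfolding run_snoc lx by blast
  qed
  also have "\<dots> = rr e * ES p t (\<lambda>xs. Phi e (run lo hi xs)) + aa e"
    using ES_lin[of p t "rr e" "\<lambda>xs. Phi e (run lo hi xs)" "aa e"] ES_one[OF sp, of t] tl by simp
  also have "\<dots> \<le> rr e * (1 + 1 / e) + aa e"
    using Suc.IH Suc.prems params[OF e0 e1] by (intro add_right_mono mult_left_mono) auto
  also have "\<dots> = 1 + 1 / e" by (rule IK[OF e0 e1])
  finally show ?case .
qed

lemma chain_win: "lo + d \<le> hi \<Longrightarrow> hi \<le> T \<Longrightarrow>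
  ES p (lo + d) (\<lambda>xs. Phi e (run lo hi xs)) \<le> rr e ^ d * (1 + 1 / e)"
proof (induction d)
  case 0
  then show ?case using chain_pre[of lo lo hi] by simp
next
  case (Suc d)
  define t where "t = lo + d"
  have tl: "lo \<le> t" "t < hi" "t < T" using Suc.prems unfolding t_def by auto
  have "ES p (Suc t) (\<lambda>xs. Phi e (run lo hi xs)) \<le> ES p t (\<lambda>xs. rr e * Phi e (run lo hi xs))"
  proof (rule ES_step[OF sp mart tl(3) _ pq1])
    fix xs :: "bool list" assume lx: "length xs = t"
    have g: "good (run lo hi xs)" by (rule run_good)
    show "0 \<le> Phi e (run lo hi (xs @ [False])) \<and>
          Phi e (run lo hi (xs @ [False])) \<le> Phi e (run lo hi (xs @ [True])) \<and>
          pp e * Phi e (run lo hi (xs @ [True])) + qq e * Phi e (run lo hi (xs @ [False]))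
          \<le> rr e * Phi e (run lo hi xs)"
      using step_window[OF e0 e1 g tl(1,2)] Phi_nonneg[OF e0 e1] unfolding run_snoc lx by blast
  qed
  also have "\<dots> = rr e * ES p t (\<lambda>xs. Phi e (run lo hi xs))" by (rule ES_scale)
  also have "\<dots> \<le> rr e * (rr e ^ d * (1 + 1 / e))"
    using Suc.IH Suc.prems params[OF e0 e1] unfolding t_def by (intro mult_left_mono) auto
  finally show ?case unfolding t_def by simp
qed

lemma chain_post: "hi + d \<le> T \<Longrightarrow> lo \<le> hi \<Longrightarrow>
  ES p (hi + d) (\<lambda>xs. Psi e (run lo hi xs)) \<le> rr e ^ (hi - lo) * (1 + 1 / e)"
proof (induction d)
  case 0
  have "ES p hi (\<lambda>xs. Psi e (run lo hi xs)) \<le> ES p hi (\<lambda>xs. Phi e (run lo hi xs))"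
    by (rule ES_mono) (rule Psi_le_Phi[OF e0 e1 run_good])
  also have "\<dots> \<le> rr e ^ (hi - lo) * (1 + 1 / e)"
    using chain_win[of lo "hi - lo" hi] 0 by simp
  finally show ?case by simp
next
  case (Suc d)
  define t where "t = hi + d"
  have tl: "hi \<le> t" "t < T" using Suc.prems unfolding t_def by auto
  have "ES p (Suc t) (\<lambda>xs. Psi e (run lo hi xs)) \<le> ES p t (\<lambda>xs. Psi e (run lo hi xs))"
  proof (rule ES_step[OF sp mart tl(2) _ pq1])
    fix xs :: "bool list" assume lx: "length xs = t"
    have g: "good (run lo hi xs)" by (rule run_good)
    show "0 \<le> Psi e (run lo hi (xs @ [False])) \<and>
          Psi e (run lo hi (xs @ [False])) \<le> Psi e (run lo hi (xs @ [True])) \<and>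
          pp e * Psi e (run lo hi (xs @ [True])) + qq e * Psi e (run lo hi (xs @ [False]))
          \<le> Psi e (run lo hi xs)"
      using step_post[OF e0 e1 g tl(1)] Psi_nonneg[OF e0 e1] unfolding run_snoc lx by blast
  qed
  also have "\<dots> \<le> rr e ^ (hi - lo) * (1 + 1 / e)" using Suc.IH Suc.prems unfolding t_def by simp
  finally show ?case unfolding t_def by simp
qed

lemma prob_as_ES: "measure_pmf.prob p A = ES p T (indicator A)"
proof -
  have "A \<inter> set_pmf p = (take T -` A) \<inter> set_pmf p" using sp by auto
  then have "measure_pmf.prob p A = measure_pmf.prob p (take T -` A)"
    by (metis measure_Int_set_pmf)
  also have "\<dots> = measure_pmf.expectation p (indicator (take T -` A))" by simp
  also have "indicator (take T -` A) = (\<lambda>w. indicator A (take T w) :: real)"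
    by (auto simp: indicator_def)
  also have "measure_pmf.expectation p (\<lambda>w. indicator A (take T w)) = ES p T (indicator A)"
    by (rule E_eq[OF sp]) simp
  finally show ?thesis .
qed

lemma window_bound:
  assumes "lo \<le> hi" "hi \<le> T"
  shows "measure_pmf.prob p {w. \<forall>c. lo < c \<and> c \<le> hi \<longrightarrow> \<not> cat w c} \<le> rr e ^ (hi - lo) * (1 + 1 / e)"
proof -
  define A where "A = {w. \<forall>c. lo < c \<and> c \<le> hi \<longrightarrow> \<not> cat w c}"
  have "measure_pmf.prob p A = ES p T (indicator A)" by (rule prob_as_ES)
  also have "\<dots> \<le> ES p T (\<lambda>xs. Psi e (run lo hi xs))"
  proof (rule ES_mono)
    fix xs :: "bool list" assume "length xs = T"
    show "indicator A xs \<le> Psi e (run lo hi xs)"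
    proof (cases "xs \<in> A")
      case True
      obtain S m tr where r: "run lo hi xs = (S, m, tr)" by (cases "run lo hi xs") auto
      have "tr = None"
      proof (rule ccontr)
        assume "tr \<noteq> None"
        then obtain a where "tr = Some a" by auto
        then obtain c where "lo < c" "c \<le> hi" "cat xs c" using run_cat r by blast
        then show False using True unfolding A_def by auto
      qed
      then show ?thesis using True r by (simp add: Psi_def)
    next
      case False
      then show ?thesis using Psi_nonneg[OF e0 e1] by simp
    qed
  qed
  also have "\<dots> \<le> rr e ^ (hi - lo) * (1 + 1 / e)" using chain_post[of hi "T - hi" lo] assms by simp
  finally show ?thesis unfolding A_def .
qed

end



lemma final_ineq:
  fixes e P :: real and k T :: nat
  assumes e0: "0 < e" and e1: "e < 1" and kT: "k < T" and P0: "0 \<le> P" and P1: "P \<le> 1"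
    and PB: "P \<le> real T * ((1 - e^3/4)^k * (1 + 1/e))"
  shows "P \<le> real T * exp (- (1/8 * e^3 * (1 - 1 * e) * real k))"
proof -
  define y where "y = e^3 * real k / 8"
  have y0: "0 \<le> y" unfolding y_def using e0 by simp
  have e3: "0 < e^3" using e0 by simp
  have e3le: "e^3 \<le> 1" using e0 e1 by (simp add: power_le_one)
  have "- y \<le> - (1/8 * e^3 * (1 - 1 * e) * real k)"
  proof -
    have "1/8 * e^3 * (1 - 1 * e) * real k \<le> 1/8 * e^3 * 1 * real k"
      using e0 e1 e3 by (intro mult_right_mono mult_left_mono) auto
    then show ?thesis unfolding y_def by simp
  qed
  then have ex: "exp (- y) \<le> exp (- (1/8 * e^3 * (1 - 1 * e) * real k))" by simp
  have T0: "0 < real T" using kT by simp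
  have rk: "(1 - e^3/4)^k \<le> exp (- (2 * y))"
  proof -
    have "1 - e^3/4 \<le> exp (- (e^3/4))" using exp_ge_add_one_self[of "- (e^3/4)"] by simp
    moreover have "0 \<le> 1 - e^3/4" using e3le by simp
    ultimately have "(1 - e^3/4)^k \<le> exp (- (e^3/4)) ^ k" by (rule power_mono)
    also have "\<dots> = exp (real k * (- (e^3/4)))" by (rule exp_of_nat_mult[symmetric])
    also have "real k * (- (e^3/4)) = - (2 * y)" unfolding y_def by (simp add: field_simps)
    finally show ?thesis .
  qed
  define K where "K = 1 + 1 / e"
  have K1: "1 \<le> K" unfolding K_def using e0 by simp
  show ?thesis
  proof (cases "K \<le> exp y")
    case True
    have "P \<le> real T * (exp (- (2 * y)) * K)"
      using PB rk K1 T0 unfolding K_def[symmetric]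
      by (meson mult_left_mono mult_right_mono order_trans less_imp_le zero_le_one)
    also have "\<dots> \<le> real T * (exp (- (2 * y)) * exp y)"
      using True T0 by (intro mult_left_mono) auto
    also have "exp (- (2 * y)) * exp y = exp (- y)" by (simp add: exp_add[symmetric])
    finally have "P \<le> real T * exp (- y)" .
    also have "\<dots> \<le> real T * exp (- (1/8 * e^3 * (1 - 1 * e) * real k))"
      using ex T0 by (intro mult_left_mono) auto
    finally show ?thesis .
  next
    case False
    have eyT: "exp y \<le> real T"
    proof (cases "e^2 / 8 \<le> y")
      case True
      have "1 / e \<le> real k"
      proof -
        have "e^2 / 8 \<le> e^3 * real k / 8" using True unfolding y_def .
        then have "e^2 \<le> e^3 * real k" by simp
        then have "e^2 \<le> e^2 * (e * real k)" by (simp add: power3_eq_cube power2_eq_square algebra_simps)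
        then have "1 \<le> e * real k" using e0 by (simp add: mult_le_cancel_left1)
        then show ?thesis using e0 by (simp add: divide_le_eq mult.commute)
      qed
      then have "K \<le> 1 + real k" unfolding K_def by simp
      also have "\<dots> \<le> real T" using kT by simp
      finally show ?thesis using False by simp
    next
      case False
      have e2: "e^2 \<le> 1" using e0 e1 by (simp add: power_le_one)
      then have yh: "y \<le> 1/2" using False by simp
      have "exp y \<le> 1 + 2 * y" using exp_bound_lemma[of y] y0 yh by simp
      also have "2 * y \<le> real k"
      proof -
        have "2 * y = e^3 * real k / 4" unfolding y_def by simp
        also have "\<dots> \<le> 1 * real k / 4" using e3le by (intro divide_right_mono mult_right_mono) auto
        finally show ?thesis by simp
      qed
      then have "1 + 2 * y \<le> 1 + real k" by simp
      also have "\<dots> \<le> real T" using kT by simp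
      finally show ?thesis by simp
    qed
    have "P \<le> 1" by (rule P1)
    also have "1 = exp y * exp (- y)" by (simp add: exp_minus)
    also have "\<dots> \<le> real T * exp (- y)" using eyT by (intro mult_right_mono) auto
    also have "\<dots> \<le> real T * exp (- (1/8 * e^3 * (1 - 1 * e) * real k))"
      using ex T0 by (intro mult_left_mono) auto
    finally show ?thesis .
  qed
qed


theorem theorem2:
  "\<exists>c::real. c > 0 \<and> (\<exists>C::real. C > 0 \<and>
     (\<forall>(\<epsilon>::real) (T::nat) (k::nat) (p::bool list pmf).
        0 < \<epsilon> \<and> \<epsilon> < 1 \<and> set_pmf p \<subseteq> {w. length w = T} \<and> eps_martingale \<epsilon> T p \<longrightarrow>
        measure_pmf.prob p {w. violates_CP k w} \<le> measure_pmf.prob p {w. violates_slot_CP k w} \<and>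
        measure_pmf.prob p {w. violates_slot_CP k w}
          \<le> real T * exp (- (c * \<epsilon> ^ 3 * (1 - C * \<epsilon>) * real k))))"
proof (rule exI[of _ "1/8"], intro conjI)
  show "(1/8::real) > 0" by simp
  show "\<exists>C::real. C > 0 \<and>
     (\<forall>(\<epsilon>::real) (T::nat) (k::nat) (p::bool list pmf).
        0 < \<epsilon> \<and> \<epsilon> < 1 \<and> set_pmf p \<subseteq> {w. length w = T} \<and> eps_martingale \<epsilon> T p \<longrightarrow>
        measure_pmf.prob p {w. violates_CP k w} \<le> measure_pmf.prob p {w. violates_slot_CP k w} \<and>
        measure_pmf.prob p {w. violates_slot_CP k w}
          \<le> real T * exp (- (1/8 * \<epsilon> ^ 3 * (1 - C * \<epsilon>) * real k)))"
  proof (rule exI[of _ 1], intro conjI allI impI)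
    show "(1::real) > 0" by simp
  next
    fix \<epsilon> :: real and T k :: nat and p :: "bool list pmf"
    assume H: "0 < \<epsilon> \<and> \<epsilon> < 1 \<and> set_pmf p \<subseteq> {w. length w = T} \<and> eps_martingale \<epsilon> T p"
    have e0: "0 < \<epsilon>" and e1: "\<epsilon> < 1" and sp: "set_pmf p \<subseteq> {w. length w = T}"
      and mart: "eps_martingale \<epsilon> T p" using H by auto
    interpret setting p T \<epsilon> by unfold_locales (use e0 e1 sp mart in auto)
    show "measure_pmf.prob p {w. violates_CP k w} \<le> measure_pmf.prob p {w. violates_slot_CP k w}"
      by (rule measure_pmf.finite_measure_mono) (auto intro: cp_imp_slot)
    define N where "N b = {w. \<forall>c. b - k < c \<and> c \<le> b \<longrightarrow> \<not> cat w c}" for b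
    define X where "X = rr \<epsilon> ^ k * (1 + 1 / \<epsilon>)"
    have X0: "0 \<le> X" unfolding X_def using params[OF e0 e1] e0 by simp
    have sub: "{w. violates_slot_CP k w} \<inter> set_pmf p \<subseteq> (\<Union>b\<in>{Suc k..T}. N b)"
    proof
      fix w assume w: "w \<in> {w. violates_slot_CP k w} \<inter> set_pmf p"
      then have lw: "length w = T" using sp by auto
      obtain b where b: "k < b" "b \<le> length w" "\<forall>c. b - k < c \<and> c \<le> b \<longrightarrow> \<not> cat w c"
        using slot_violation_window[of k w] w by auto
      then show "w \<in> (\<Union>b\<in>{Suc k..T}. N b)" unfolding N_def using lw by auto
    qed
    have "measure_pmf.prob p {w. violates_slot_CP k w} = measure_pmf.prob p ({w. violates_slot_CP k w} \<inter> set_pmf p)"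
      by (simp add: measure_Int_set_pmf)
    also have "\<dots> \<le> measure_pmf.prob p (\<Union>b\<in>{Suc k..T}. N b)"
      using sub by (rule measure_pmf.finite_measure_mono) simp
    also have "\<dots> \<le> (\<Sum>b\<in>{Suc k..T}. measure_pmf.prob p (N b))"
      by (rule measure_pmf.finite_measure_subadditive_finite) auto
    also have "\<dots> \<le> (\<Sum>b\<in>{Suc k..T}. X)"
    proof (rule sum_mono)
      fix b assume b: "b \<in> {Suc k..T}"
      have "measure_pmf.prob p (N b) \<le> rr \<epsilon> ^ (b - (b - k)) * (1 + 1 / \<epsilon>)"
        unfolding N_def by (rule window_bound) (use b in auto)
      moreover have "b - (b - k) = k" using b by simp
      ultimately show "measure_pmf.prob p (N b) \<le> X" unfolding X_def by simp
    qed
    also have "\<dots> = real (T - k) * X" by simp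
    finally have PB: "measure_pmf.prob p {w. violates_slot_CP k w} \<le> real (T - k) * X" .
    show "measure_pmf.prob p {w. violates_slot_CP k w} \<le> real T * exp (- (1/8 * \<epsilon> ^ 3 * (1 - 1 * \<epsilon>) * real k))"
    proof (cases "k < T")
      case False
      then have "measure_pmf.prob p {w. violates_slot_CP k w} \<le> 0" using PB by simp
      also have "0 \<le> real T * exp (- (1/8 * \<epsilon> ^ 3 * (1 - 1 * \<epsilon>) * real k))" by simp
      finally show ?thesis .
    next
      case True
      have "real (T - k) * X \<le> real T * X" using X0 by (intro mult_right_mono) auto
      then have PB2: "measure_pmf.prob p {w. violates_slot_CP k w} \<le> real T * ((1 - \<epsilon>^3/4)^k * (1 + 1/\<epsilon>))"
        using PB unfolding X_def rr_def by linarith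
      show ?thesis
        by (rule final_ineq[OF e0 e1 True _ _ PB2]) auto
    qed
  qed
qed

end
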